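(* Let $s_{m,n}(x)=S_{\lambda(m,n)}(x,\tfrac12,0,0,\ldots)$ for $m,n\in\mathbb{Z}$. Then: (1) for all $m,n\in\mathbb{Z}$, the triple $(\tau_0,\tau_1,\tau_2)=(s_{m,n},s_{m+1,n},s_{m+1,n+1})$ solves $$\Big(D_x^2-xD_x-\frac{\alpha_i-\alpha_{i+1}}{3}\Big)\tau_i\cdot\tau_{i+1}=0\quad(i=0,1,2)$$ with $(\alpha_0,\alpha_1,\alpha_2)=(3m+1,3(n-m)+1,-3n+1)$; (2) for all $m,n\in\mathbb{Z}$, the triple $(\tau_0,\tau_1,\tau_2)=(s_{m,n},s_{m,n+1},s_{m+1,n+1})$ solves the same system with $(\alpha_0,\alpha_1,\alpha_2)=(3n+2,3(m-n)-1,-3m+2)$.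
   Context: Indices mod 3; $D_xF\cdot G=F'G-FG'$, $D_x^2F\cdot G=F''G-2F'G'+FG''$. Schur functions: $S_\lambda(t)=\det(p_{\lambda_i-i+j}(t))_{1\le i,j\le l(\lambda)}$ with $\sum_{n\ge0}p_n(t)z^n=\exp(\sum_{k\ge1}t_kz^k)$, $p_n=0$ for $n<0$, $S_\emptyset=1$. A Maya diagram is $M\subset\mathbb{Z}$ containing all sufficiently negative and no sufficiently large integers; writing $M=\{\cdots<m_3<m_2<m_1\}$, its partition is defined by $m_i-m_{i+1}=\lambda_i-\lambda_{i+1}+1$. With $D_l=\{k\in\mathbb{Z}:k<l\}$, $\lambda(m,n)$ is the partition of $M(m,n)=3D_m\cup(3D_n+1)\cup(3D_0+2)$. *)

theory Defs
  imports "HOL-Analysis.Analysis" "HOL-Computational_Algebra.Formal_Power_Series"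
    "Jordan_Normal_Form.Determinant"
begin

text \<open>Elementary Schur polynomials: sum_n p_n(t) z^n = exp(sum_{k>=1} t_k z^k),
  with p_n = 0 for n < 0. The sequence t is indexed by k >= 1 (t 0 is ignored).\<close>
definition schur_p :: "(nat \<Rightarrow> real) \<Rightarrow> int \<Rightarrow> real" where
  "schur_p t n = (if n < 0 then 0
     else fps_nth (fps_exp 1 oo Abs_fps (\<lambda>k. if k = 0 then 0 else t k)) (nat n))"

text \<open>Elements of a Maya diagram in decreasing order: maya_seq M (i-1) = m_i.\<close>
fun maya_seq :: "int set \<Rightarrow> nat \<Rightarrow> int" where
  "maya_seq M 0 = Sup M"
| "maya_seq M (Suc i) = Sup {k \<in> M. k < maya_seq M i}"

definition maya_charge :: "int set \<Rightarrow> int" where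
  "maya_charge M = (THE c. \<exists>N. \<forall>i\<ge>N. maya_seq M i + int (i + 1) = c)"

text \<open>Partition of a Maya diagram: lambda_i for i >= 1, determined by
  m_i - m_{i+1} = lambda_i - lambda_{i+1} + 1 and lambda_i = 0 eventually.\<close>
definition maya_part :: "int set \<Rightarrow> nat \<Rightarrow> int" where
  "maya_part M i = maya_seq M (i - 1) + int i - maya_charge M"

definition part_length :: "(nat \<Rightarrow> int) \<Rightarrow> nat" where
  "part_length lam = card {i. 1 \<le> i \<and> lam i \<noteq> 0}"

definition schur :: "(nat \<Rightarrow> int) \<Rightarrow> (nat \<Rightarrow> real) \<Rightarrow> real" where
  "schur lam t = (let l = part_length lam in
     det (mat l l (\<lambda>(i, j). schur_p t (lam (i + 1) - int (i + 1) + int (j + 1)))))"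

definition D_set :: "int \<Rightarrow> int set" where
  "D_set l = {k. k < l}"

definition M_mn :: "int \<Rightarrow> int \<Rightarrow> int set" where
  "M_mn m n = ((\<lambda>k. 3 * k) ` D_set m) \<union> ((\<lambda>k. 3 * k + 1) ` D_set n)
              \<union> ((\<lambda>k. 3 * k + 2) ` D_set 0)"

definition lambda_mn :: "int \<Rightarrow> int \<Rightarrow> nat \<Rightarrow> int" where
  "lambda_mn m n = maya_part (M_mn m n)"

definition s_mn :: "int \<Rightarrow> int \<Rightarrow> real \<Rightarrow> real" where
  "s_mn m n x = schur (lambda_mn m n)
      (\<lambda>k. if k = 1 then x else if k = 2 then 1/2 else 0)"

text \<open>(D_x^2 - x D_x - c) F . G evaluated at x.\<close>
definition hirota :: "real \<Rightarrow> (real \<Rightarrow> real) \<Rightarrow> (real \<Rightarrow> real) \<Rightarrow> real \<Rightarrow> real" where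
  "hirota c F G x =
     deriv (deriv F) x * G x - 2 * deriv F x * deriv G x + F x * deriv (deriv G) x
     - x * (deriv F x * G x - F x * deriv G x) - c * F x * G x"

definition solves_system :: "(real \<Rightarrow> real) \<Rightarrow> (real \<Rightarrow> real) \<Rightarrow> (real \<Rightarrow> real)
    \<Rightarrow> real \<Rightarrow> real \<Rightarrow> real \<Rightarrow> bool" where
  "solves_system t0 t1 t2 a0 a1 a2 \<longleftrightarrow> (\<forall>x.
      hirota ((a0 - a1) / 3) t0 t1 x = 0 \<and>
      hirota ((a1 - a2) / 3) t1 t2 x = 0 \<and>
      hirota ((a2 - a0) / 3) t2 t0 x = 0)"

end

theory Submission
  imports Defs
begin

definition tx :: "real \<Rightarrow> nat \<Rightarrow> real" where
  "tx x = (\<lambda>k. if k = 1 then x else if k = 2 then 1/2 else 0)"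

definition E :: "real \<Rightarrow> real fps" where
  "E x = fps_exp 1 oo Abs_fps (\<lambda>k. if k = 0 then 0 else tx x k)"

lemma E_deriv: "fps_deriv (E x) = E x * (fps_const x + fps_X)"
proof -
  let ?A = "Abs_fps (\<lambda>k. if k = 0 then 0 else tx x k)"
  have "fps_deriv (E x) = (fps_deriv (fps_exp 1) oo ?A) * fps_deriv ?A"
    unfolding E_def by (rule fps_compose_deriv) simp
  also have "fps_deriv ?A = fps_const x + fps_X"
    by (rule fps_ext) (auto simp: tx_def fps_X_def)
  finally show ?thesis by (simp add: E_def)
qed

lemma E_rec: "of_nat (Suc n) * fps_nth (E x) (Suc n) = x * fps_nth (E x) n + (if n = 0 then 0 else fps_nth (E x) (n - 1))"
proof -
  have "fps_nth (fps_deriv (E x)) n = fps_nth (E x * (fps_const x + fps_X)) n" by (simp add: E_deriv)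
  then show ?thesis by (simp add: algebra_simps fps_mult_fps_X_plus_1_nth)
qed

definition q :: "int \<Rightarrow> real \<Rightarrow> real" where
  "q n x = schur_p (tx x) n"

lemma q_E: "q n x = (if n < 0 then 0 else fps_nth (E x) (nat n))"
  by (simp add: q_def schur_p_def E_def)

lemma q_neg: "n < 0 \<Longrightarrow> q n x = 0" by (simp add: q_E)
lemma q_0: "q 0 x = 1" by (simp add: q_E E_def)

lemma q_rec: "of_int n * q n x = x * q (n - 1) x + q (n - 2) x"
proof (cases "n \<ge> 1")
  case True
  define k where "k = nat n - 1"
  have k: "n = int (Suc k)" using True by (simp add: k_def)
  show ?thesis
  proof (cases k)
    case 0 then show ?thesis using E_rec[of 0 x] k by (simp add: q_E)
  next
    case (Suc j)
    have "n - 1 = int (Suc j)" "n - 2 = int j" using k Suc by auto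
    then show ?thesis using E_rec[of k x] k Suc by (simp add: q_E nat_add_distrib)
  qed
next
  case False
  then show ?thesis by (cases "n = 0") (auto simp: q_neg)
qed

lemma q_deriv: "(q n has_real_derivative q (n - 1) x) (at x)"
proof (induction "nat n" arbitrary: n x rule: less_induct)
  case less
  show ?case
  proof (cases "n \<ge> 1")
    case False
    then have "q n = (\<lambda>x. if n = 0 then 1 else 0)" by (auto simp: q_neg q_0)
    moreover have "q (n - 1) x = 0" using False by (simp add: q_neg)
    ultimately show ?thesis by simp
  next
    case True
    have eq: "q n = (\<lambda>x. (x * q (n - 1) x + q (n - 2) x) / of_int n)"
      using q_rec[of n] True by (auto simp: field_simps)
    have d1: "\<And>y. (q (n - 1) has_real_derivative q (n - 1 - 1) y) (at y)"
      using less[of "n - 1"] True by auto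
    have d2: "\<And>y. (q (n - 2) has_real_derivative q (n - 2 - 1) y) (at y)"
    proof -
      fix y show "(q (n - 2) has_real_derivative q (n - 2 - 1) y) (at y)"
      proof (cases "n \<ge> 2")
        case True then show ?thesis using less[of "n - 2"] by auto
      next
        case False
        then have "q (n - 2) = (\<lambda>x. 0)" using \<open>n \<ge> 1\<close> by (auto simp: q_neg)
        moreover have "q (n - 2 - 1) y = 0" using False by (simp add: q_neg)
        ultimately show ?thesis by simp
      qed
    qed
    have "((\<lambda>x. (x * q (n - 1) x + q (n - 2) x) / of_int n) has_real_derivative
       (1 * q (n - 1) x + q (n - 1 - 1) x * x + q (n - 2 - 1) x) / of_int n) (at x)"
      by (rule DERIV_cdivide[OF DERIV_add[OF DERIV_mult[OF DERIV_ident d1] d2]])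
    moreover have "(1 * q (n - 1) x + q (n - 1 - 1) x * x + q (n - 2 - 1) x) / of_int n = q (n - 1) x"
    proof -
      have "of_int (n - 1) * q (n - 1) x = x * q (n - 1 - 1) x + q (n - 1 - 2) x" by (rule q_rec)
      moreover have "n - 2 - 1 = n - 1 - 2" by simp
      ultimately show ?thesis using True by (simp add: field_simps)
    qed
    ultimately show ?thesis by (simp add: eq)
  qed
qed

definition dt :: "nat \<Rightarrow> (nat \<Rightarrow> nat \<Rightarrow> real) \<Rightarrow> real" where
  "dt n f = det (mat n n (\<lambda>(j,i). f j i))"

lemma dt_leibniz: "dt n f = (\<Sum>p\<in>{p. p permutes {0..<n}}. signof p * (\<Prod>i=0..<n. f i (p i)))"
proof -
  have "dt n f = (\<Sum>p\<in>{p. p permutes {0..<n}}. signof p * (\<Prod>i=0..<n. mat n n (\<lambda>(j,i). f j i) $$ (i, p i)))"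
    unfolding dt_def by (rule det_def') simp
  also have "\<dots> = (\<Sum>p\<in>{p. p permutes {0..<n}}. signof p * (\<Prod>i=0..<n. f i (p i)))"
    by (intro sum.cong refl arg_cong2[where f="(*)"] prod.cong) (auto simp: permutes_in_image)
  finally show ?thesis .
qed

lemma dt_cong: "(\<And>j i. j < n \<Longrightarrow> i < n \<Longrightarrow> f j i = g j i) \<Longrightarrow> dt n f = dt n g"
  unfolding dt_def by (intro arg_cong[where f=det] eq_matI) auto

lemma dt_transpose: "dt n f = dt n (\<lambda>j i. f i j)"
proof -
  have "dt n f = det (transpose_mat (mat n n (\<lambda>(j,i). f j i)))"
    unfolding dt_def using det_transpose[of "mat n n (\<lambda>(j,i). f j i)" n] by simp
  also have "transpose_mat (mat n n (\<lambda>(j,i). f j i)) = mat n n (\<lambda>(j,i). f i j)"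
    by (rule eq_matI) auto
  finally show ?thesis by (simp add: dt_def)
qed

lemma dt_dup:
  assumes "j < n" "k < n" "j \<noteq> k" "\<And>i. i < n \<Longrightarrow> f j i = f k i"
  shows "dt n f = 0"
  unfolding dt_def
  by (rule det_identical_rows[of _ n j k]) (use assms in \<open>auto intro!: eq_vecI\<close>)

lemma dt_perm_rows:
  assumes "p permutes {0..<n}"
  shows "dt n (\<lambda>j. f (p j)) = signof p * dt n f"
proof -
  have "det (mat n n (\<lambda>(j,i). mat n n (\<lambda>(j,i). f j i) $$ (p j, i))) = signof p * det (mat n n (\<lambda>(j,i). f j i))"
    by (rule det_permute_rows[OF _ assms]) simp
  moreover have "mat n n (\<lambda>(j,i). mat n n (\<lambda>(j,i). f j i) $$ (p j, i)) = mat n n (\<lambda>(j,i). f (p j) i)"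
    using assms by (intro eq_matI) (auto simp: permutes_in_image)
  ultimately show ?thesis by (simp add: dt_def)
qed

lemma dt_perm_cols:
  assumes "p permutes {0..<n}"
  shows "dt n (\<lambda>j i. f j (p i)) = signof p * dt n f"
proof -
  have "dt n (\<lambda>j i. f j (p i)) = dt n (\<lambda>i j. f j (p i))" by (rule dt_transpose)
  also have "\<dots> = signof p * dt n (\<lambda>i j. f j i)" by (rule dt_perm_rows[OF assms])
  also have "dt n (\<lambda>i j. f j i) = dt n f" by (rule dt_transpose[symmetric])
  finally show ?thesis .
qed

lemma dt_swap:
  assumes "j < n" "k < n" "j \<noteq> k"
  shows "dt n (f(j := f k, k := f j)) = - dt n f"
proof -
  let ?p = "Transposition.transpose j k"
  have p: "?p permutes {0..<n}" using assms by (intro permutes_swap_id) auto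
  have "f(j := f k, k := f j) = (\<lambda>a. f (?p a))" using assms by (auto simp: Transposition.transpose_def)
  then have "dt n (f(j := f k, k := f j)) = signof ?p * dt n f" using dt_perm_rows[OF p, of f] by simp
  moreover have "sign ?p = (-1::int)" using assms by (simp add: sign_swap_id)
  ultimately show ?thesis by simp
qed

lemma dt_row_linear:
  assumes "j < n"
  shows "\<exists>K. \<forall>v. dt n (f(j := v)) = (\<Sum>i<n. v i * K i)"
proof -
  define A where "A = mat n n (\<lambda>(a,b). f a b)"
  show ?thesis
  proof (intro exI allI)
    fix v
    let ?B = "mat n n (\<lambda>(a,b). (f(j:=v)) a b)"
    have "dt n (f(j := v)) = (\<Sum>i<n. ?B $$ (j,i) * cofactor ?B j i)"
      unfolding dt_def by (rule laplace_expansion_row) (use assms in auto)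
    also have "\<dots> = (\<Sum>i<n. v i * cofactor A j i)"
    proof (intro sum.cong refl)
      fix i assume i: "i \<in> {..<n}"
      have "mat_delete ?B j i = mat_delete A j i"
        unfolding mat_delete_def A_def by (intro eq_matI) auto
      then show "?B $$ (j,i) * cofactor ?B j i = v i * cofactor A j i"
        using i assms by (simp add: cofactor_def)
    qed
    finally show "dt n (f(j := v)) = (\<Sum>i<n. v i * cofactor A j i)" .
  qed
qed

lemma dt_row_lin2:
  assumes "j < n"
  shows "dt n (f(j := (\<lambda>i. a * u i + b * w i))) = a * dt n (f(j := u)) + b * dt n (f(j := w))"
proof -
  obtain K where K: "\<And>v. dt n (f(j := v)) = (\<Sum>i<n. v i * K i)" using dt_row_linear[OF assms] by blast
  show ?thesis unfolding K by (simp add: sum.distrib sum_distrib_left algebra_simps)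
qed

lemma dt_rowsum:
  "(\<Sum>j<n. dt n (f(j := g j))) =
   (\<Sum>p\<in>{p. p permutes {0..<n}}. signof p * (\<Sum>j<n. g j (p j) * (\<Prod>i\<in>{0..<n}-{j}. f i (p i))))"
proof -
  have "(\<Sum>j<n. dt n (f(j := g j))) =
     (\<Sum>j<n. \<Sum>p\<in>{p. p permutes {0..<n}}. signof p * (g j (p j) * (\<Prod>i\<in>{0..<n}-{j}. f i (p i))))"
  proof (intro sum.cong refl)
    fix j assume j: "j \<in> {..<n}"
    show "dt n (f(j := g j)) = (\<Sum>p\<in>{p. p permutes {0..<n}}. signof p * (g j (p j) * (\<Prod>i\<in>{0..<n}-{j}. f i (p i))))"
      unfolding dt_leibniz
    proof (intro sum.cong refl arg_cong2[where f="(*)"])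
      fix p
      have "(\<Prod>i=0..<n. (f(j := g j)) i (p i)) = (f(j := g j)) j (p j) * (\<Prod>i\<in>{0..<n}-{j}. (f(j := g j)) i (p i))"
        using j by (intro prod.remove) auto
      also have "(\<Prod>i\<in>{0..<n}-{j}. (f(j := g j)) i (p i)) = (\<Prod>i\<in>{0..<n}-{j}. f i (p i))"
        by (intro prod.cong) auto
      finally show "(\<Prod>i=0..<n. (f(j := g j)) i (p i)) = g j (p j) * (\<Prod>i\<in>{0..<n}-{j}. f i (p i))" by simp
    qed
  qed
  also have "\<dots> = (\<Sum>p\<in>{p. p permutes {0..<n}}. \<Sum>j<n. signof p * (g j (p j) * (\<Prod>i\<in>{0..<n}-{j}. f i (p i))))"
    by (rule sum.swap)
  also have "\<dots> = (\<Sum>p\<in>{p. p permutes {0..<n}}. signof p * (\<Sum>j<n. g j (p j) * (\<Prod>i\<in>{0..<n}-{j}. f i (p i))))"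
    by (simp add: sum_distrib_left)
  finally show ?thesis .
qed

lemma dt_deriv:
  assumes "\<And>j i. ((\<lambda>x. F j i x) has_real_derivative F' j i x) (at x)"
  shows "((\<lambda>x. dt n (\<lambda>j i. F j i x)) has_real_derivative
           (\<Sum>j<n. dt n ((\<lambda>j i. F j i x)(j := (\<lambda>i. F' j i x))))) (at x)"
proof -
  have eq: "(\<lambda>x. dt n (\<lambda>j i. F j i x)) = (\<lambda>x. \<Sum>p\<in>{p. p permutes {0..<n}}. signof p * (\<Prod>i\<in>{0..<n}. F i (p i) x))"
    by (simp add: dt_leibniz)
  have "((\<lambda>x. \<Sum>p\<in>{p. p permutes {0..<n}}. signof p * (\<Prod>i\<in>{0..<n}. F i (p i) x)) has_real_derivative
     (\<Sum>p\<in>{p. p permutes {0..<n}}. signof p * (\<Sum>j\<in>{0..<n}. F' j (p j) x * (\<Prod>i\<in>{0..<n}-{j}. F i (p i) x)))) (at x)"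
    by (intro DERIV_sum DERIV_cmult has_field_derivative_prod assms)
  moreover have "{0..<n} = {..<n}" by auto
  ultimately show ?thesis unfolding eq dt_rowsum by simp
qed

lemma dt_trace:
  "(\<Sum>j<n. dt n (f(j := (\<lambda>i. (u i - v j) * f j i)))) = ((\<Sum>i<n. u i) - (\<Sum>j<n. v j)) * dt n f"
proof -
  have "(\<Sum>j<n. dt n (f(j := (\<lambda>i. (u i - v j) * f j i)))) =
     (\<Sum>p\<in>{p. p permutes {0..<n}}. signof p * (\<Sum>j<n. (u (p j) - v j) * f j (p j) * (\<Prod>i\<in>{0..<n}-{j}. f i (p i))))"
    by (rule dt_rowsum)
  also have "\<dots> = (\<Sum>p\<in>{p. p permutes {0..<n}}. ((\<Sum>i<n. u i) - (\<Sum>j<n. v j)) * (signof p * (\<Prod>i=0..<n. f i (p i))))"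
  proof (intro sum.cong refl)
    fix p assume p: "p \<in> {p. p permutes {0..<n}}"
    have "\<And>j. j < n \<Longrightarrow> f j (p j) * (\<Prod>i\<in>{0..<n}-{j}. f i (p i)) = (\<Prod>i=0..<n. f i (p i))"
      by (subst prod.remove[of "{0..<n}"]) auto
    then have "(\<Sum>j<n. (u (p j) - v j) * f j (p j) * (\<Prod>i\<in>{0..<n}-{j}. f i (p i)))
        = (\<Sum>j<n. (u (p j) - v j)) * (\<Prod>i=0..<n. f i (p i))"
      by (simp add: sum_distrib_right mult.assoc)
    moreover have "(\<Sum>j<n. u (p j)) = (\<Sum>i<n. u i)"
    proof -
      have pp: "p permutes {..<n}" using p by (simp add: atLeast0LessThan)
      show ?thesis using sum.permute[OF pp, of u] by (simp add: comp_def)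
    qed
    ultimately show "signof p * (\<Sum>j<n. (u (p j) - v j) * f j (p j) * (\<Prod>i\<in>{0..<n}-{j}. f i (p i))) =
       ((\<Sum>i<n. u i) - (\<Sum>j<n. v j)) * (signof p * (\<Prod>i=0..<n. f i (p i)))"
      by (simp add: sum_subtractf)
  qed
  also have "\<dots> = ((\<Sum>i<n. u i) - (\<Sum>j<n. v j)) * dt n f"
    by (simp add: dt_leibniz sum_distrib_left)
  finally show ?thesis .
qed

lemma dt_lastrow:
  assumes "\<And>i. i < Suc n \<Longrightarrow> f n i = (if i = n then 1 else 0)"
  shows "dt (Suc n) f = dt n f"
proof -
  let ?A = "mat (Suc n) (Suc n) (\<lambda>(j,i). f j i)"
  have "dt (Suc n) f = (\<Sum>i<Suc n. ?A $$ (n,i) * cofactor ?A n i)"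
    unfolding dt_def by (rule laplace_expansion_row) auto
  also have "\<dots> = (\<Sum>i<Suc n. (if i = n then cofactor ?A n i else 0))"
    using assms by (intro sum.cong) auto
  also have "\<dots> = cofactor ?A n n" by simp
  also have "\<dots> = det (mat_delete ?A n n)" by (simp add: cofactor_def)
  also have "mat_delete ?A n n = mat n n (\<lambda>(j,i). f j i)"
    unfolding mat_delete_def by (intro eq_matI) auto
  finally show ?thesis by (simp add: dt_def)
qed

lemma dt_kernel:
  assumes "dt n M \<noteq> 0" and "\<And>k. k < n \<Longrightarrow> (\<Sum>i<n. M k i * w i) = 0" and "i < n"
  shows "w i = 0"
proof (rule ccontr)
  assume "w i \<noteq> 0"
  let ?A = "mat n n (\<lambda>(j,i). M j i)"
  let ?v = "vec n w"
  have "?v \<noteq> 0\<^sub>v n" using \<open>w i \<noteq> 0\<close> \<open>i < n\<close> by (metis index_vec index_zero_vec(1))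
  moreover have "?A *\<^sub>v ?v = 0\<^sub>v n"
  proof (rule eq_vecI)
    fix k assume k: "k < dim_vec (0\<^sub>v n :: real vec)"
    then have "(?A *\<^sub>v ?v) $ k = (\<Sum>i<n. M k i * w i)"
      by (simp add: mult_mat_vec_def scalar_prod_def atLeast0LessThan)
    also have "\<dots> = 0" using assms(2) k by simp
    finally show "(?A *\<^sub>v ?v) $ k = 0\<^sub>v n $ k" using k by simp
  qed simp
  ultimately have "\<exists>v. v \<in> carrier_vec n \<and> v \<noteq> 0\<^sub>v n \<and> ?A *\<^sub>v v = 0\<^sub>v n"
    by (intro exI[of _ ?v]) auto
  then have "det ?A = 0" using det_0_iff_vec_prod_zero_field[of ?A n] by simp
  then show False using assms(1) by (simp add: dt_def)
qed

lemma plucker_aux: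
  assumes "dt n M \<noteq> 0" and "\<And>k. k < n \<Longrightarrow> G (M k) = 0" and "\<And>d. G d = (\<Sum>i<n. d i * w i)"
  shows "G d = 0"
proof -
  have "\<And>i. i < n \<Longrightarrow> w i = 0"
    by (rule dt_kernel[OF assms(1)]) (use assms(2,3) in auto)
  then show ?thesis using assms(3)[of d] by simp
qed

lemma plucker:
  fixes f :: "nat \<Rightarrow> nat \<Rightarrow> real" and s :: nat and a b c d :: "nat \<Rightarrow> real"
  defines "P \<equiv> (\<lambda>a b. dt (Suc (Suc s)) (f(s := a, Suc s := b)))"
  shows "P a b * P c d - P a c * P b d + P a d * P b c = 0"
proof -
  let ?n = "Suc (Suc s)"
  define G where "G = (\<lambda>d. P a b * P c d - P a c * P b d + P a d * P b c)"
  obtain K1 where K1: "\<And>v. P c v = (\<Sum>i<?n. v i * K1 i)"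
    using dt_row_linear[of "Suc s" ?n "f(s := c)"] unfolding P_def by auto
  obtain K2 where K2: "\<And>v. P b v = (\<Sum>i<?n. v i * K2 i)"
    using dt_row_linear[of "Suc s" ?n "f(s := b)"] unfolding P_def by auto
  obtain K3 where K3: "\<And>v. P a v = (\<Sum>i<?n. v i * K3 i)"
    using dt_row_linear[of "Suc s" ?n "f(s := a)"] unfolding P_def by auto
  define w where "w = (\<lambda>i. P a b * K1 i - P a c * K2 i + P b c * K3 i)"
  have lin: "\<And>d. G d = (\<Sum>i<?n. d i * w i)"
  proof -
    fix d
    have "(\<Sum>i<?n. d i * w i) = (\<Sum>i<?n. P a b * (d i * K1 i) - P a c * (d i * K2 i) + P b c * (d i * K3 i))"
      unfolding w_def by (intro sum.cong refl) (simp add: algebra_simps)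
    also have "\<dots> = P a b * (\<Sum>i<?n. d i * K1 i) - P a c * (\<Sum>i<?n. d i * K2 i) + P b c * (\<Sum>i<?n. d i * K3 i)"
      by (simp only: sum.distrib sum_subtractf sum_distrib_left)
    also have "\<dots> = G d" unfolding G_def K1[of d] K2[of d] K3[of d] by simp
    finally show "G d = (\<Sum>i<?n. d i * w i)" by simp
  qed
  have dup: "\<And>u k. k < s \<Longrightarrow> P u (f k) = 0"
  proof -
    fix u k assume k: "k < s"
    show "P u (f k) = 0"
      unfolding P_def by (rule dt_dup[where j=k and k="Suc s"]) (use k in auto)
  qed
  have dup2: "\<And>u. P u u = 0"
    unfolding P_def by (rule dt_dup[where j=s and k="Suc s"]) auto
  have swp: "\<And>u v. P v u = - P u v"
  proof -
    fix u v
    have "(f(s := u, Suc s := v))(s := (f(s := u, Suc s := v)) (Suc s), Suc s := (f(s := u, Suc s := v)) s)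
        = f(s := v, Suc s := u)" by (auto simp: fun_eq_iff)
    then show "P v u = - P u v"
      unfolding P_def using dt_swap[of s ?n "Suc s" "f(s := u, Suc s := v)"] by simp
  qed
  have Gq: "\<And>k. k < s \<Longrightarrow> G (f k) = 0" unfolding G_def using dup by simp
  have Ga: "G a = 0" unfolding G_def using dup2 swp[of a c] swp[of a b] by (simp add: algebra_simps)
  have Gb: "G b = 0" unfolding G_def using dup2 swp[of b c] by (simp add: algebra_simps)
  have Gc: "G c = 0" unfolding G_def using dup2 by (simp add: algebra_simps)
  have rows: "\<And>u v k. k < ?n \<Longrightarrow> G u = 0 \<Longrightarrow> G v = 0 \<Longrightarrow> G ((f(s := u, Suc s := v)) k) = 0"
    using Gq by (auto simp: less_Suc_eq)
  have "G d = 0"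
  proof (cases "P a b \<noteq> 0")
    case True
    show ?thesis by (rule plucker_aux[of ?n "f(s := a, Suc s := b)" G w])
      (use True lin rows[OF _ Ga Gb] in \<open>auto simp: P_def\<close>)
  next
    case F1: False
    show ?thesis
    proof (cases "P a c \<noteq> 0")
      case True
      show ?thesis by (rule plucker_aux[of ?n "f(s := a, Suc s := c)" G w])
        (use True lin rows[OF _ Ga Gc] in \<open>auto simp: P_def\<close>)
    next
      case F2: False
      show ?thesis
      proof (cases "P b c \<noteq> 0")
        case True
        show ?thesis by (rule plucker_aux[of ?n "f(s := b, Suc s := c)" G w])
          (use True lin rows[OF _ Gb Gc] in \<open>auto simp: P_def\<close>)
      next
        case False
        then show ?thesis using F1 F2 by (simp add: G_def)
      qed
    qed
  qed
  then show ?thesis by (simp add: G_def)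
qed

lemma dt_zero_row:
  assumes "j < n" "\<And>i. f j i = 0"
  shows "dt n f = 0"
proof -
  obtain K where K: "\<And>v. dt n (f(j := v)) = (\<Sum>i<n. v i * K i)" using dt_row_linear[OF assms(1)] by blast
  have "f = f(j := (\<lambda>i. 0))" using assms(2) by (auto simp: fun_eq_iff)
  then have "dt n f = dt n (f(j := (\<lambda>i. 0)))" by simp
  also have "\<dots> = 0" unfolding K by simp
  finally show ?thesis .
qed

definition rowv :: "(nat \<Rightarrow> int) \<Rightarrow> nat \<Rightarrow> real \<Rightarrow> nat option \<Rightarrow> nat \<Rightarrow> real" where
  "rowv b r x l i = (case l of Some h \<Rightarrow> q (b i - int h) x | None \<Rightarrow> (if i = r then 1 else 0))"

definition DL :: "(nat \<Rightarrow> int) \<Rightarrow> nat \<Rightarrow> nat \<Rightarrow> (nat \<Rightarrow> nat option) \<Rightarrow> real \<Rightarrow> real" where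
  "DL b r n L x = dt n (\<lambda>j. rowv b r x (L j))"

definition D1 :: "(nat \<Rightarrow> int) \<Rightarrow> nat \<Rightarrow> nat \<Rightarrow> (nat \<Rightarrow> nat option) \<Rightarrow> real \<Rightarrow> real" where
  "D1 b r n L x = (\<Sum>j<n. case L j of None \<Rightarrow> 0 | Some h \<Rightarrow> DL b r n (L(j := Some (Suc h))) x)"

definition D2 :: "(nat \<Rightarrow> int) \<Rightarrow> nat \<Rightarrow> nat \<Rightarrow> (nat \<Rightarrow> nat option) \<Rightarrow> real \<Rightarrow> real" where
  "D2 b r n L x = (\<Sum>j<n. case L j of None \<Rightarrow> 0 | Some h \<Rightarrow> DL b r n (L(j := Some (Suc (Suc h)))) x)"

lemma DL_upd: "DL b r n (L(j := l)) x = dt n ((\<lambda>k. rowv b r x (L k))(j := rowv b r x l))"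
  unfolding DL_def by (intro arg_cong[where f="dt n"]) (auto simp: fun_eq_iff)

lemma DL_dup: "j < n \<Longrightarrow> k < n \<Longrightarrow> j \<noteq> k \<Longrightarrow> L j = L k \<Longrightarrow> DL b r n L x = 0"
  unfolding DL_def by (rule dt_dup[where j=j and k=k]) auto

lemma DL_swap: "j < n \<Longrightarrow> k < n \<Longrightarrow> j \<noteq> k \<Longrightarrow> DL b r n (L(j := L k, k := L j)) x = - DL b r n L x"
proof -
  assume a: "j < n" "k < n" "j \<noteq> k"
  have "(\<lambda>i. rowv b r x ((L(j := L k, k := L j)) i)) =
     (\<lambda>i. rowv b r x (L i))(j := rowv b r x (L k), k := rowv b r x (L j))"
    using a by (auto simp: fun_eq_iff)
  then show ?thesis unfolding DL_def using dt_swap[OF a, of "\<lambda>i. rowv b r x (L i)"] by simp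
qed

lemma DL_deriv: "((\<lambda>x. DL b r n L x) has_real_derivative D1 b r n L x) (at x)"
proof -
  define F' where "F' = (\<lambda>j i (x::real). case L j of None \<Rightarrow> 0 | Some h \<Rightarrow> q (b i - int h - 1) x)"
  have d: "\<And>j i. ((\<lambda>x. rowv b r x (L j) i) has_real_derivative F' j i x) (at x)"
  proof -
    fix j i
    show "((\<lambda>x. rowv b r x (L j) i) has_real_derivative F' j i x) (at x)"
    proof (cases "L j")
      case None then show ?thesis by (simp add: rowv_def F'_def)
    next
      case (Some h)
      then show ?thesis using q_deriv[of "b i - int h" x] by (simp add: rowv_def F'_def)
    qed
  qed
  have "((\<lambda>x. dt n (\<lambda>j i. rowv b r x (L j) i)) has_real_derivative
     (\<Sum>j<n. dt n ((\<lambda>j i. rowv b r x (L j) i)(j := (\<lambda>i. F' j i x))))) (at x)"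
    by (rule dt_deriv) (rule d)
  moreover have "(\<Sum>j<n. dt n ((\<lambda>j i. rowv b r x (L j) i)(j := (\<lambda>i. F' j i x)))) = D1 b r n L x"
    unfolding D1_def
  proof (intro sum.cong refl)
    fix j assume j: "j \<in> {..<n}"
    show "dt n ((\<lambda>j i. rowv b r x (L j) i)(j := (\<lambda>i. F' j i x))) =
      (case L j of None \<Rightarrow> 0 | Some h \<Rightarrow> DL b r n (L(j := Some (Suc h))) x)"
    proof (cases "L j")
      case None
      have "dt n ((\<lambda>j i. rowv b r x (L j) i)(j := (\<lambda>i. F' j i x))) = 0"
        using j None by (intro dt_zero_row[of j]) (auto simp: F'_def)
      then show ?thesis using None by simp
    next
      case (Some h)
      have "(\<lambda>i. F' j i x) = rowv b r x (Some (Suc h))"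
        using Some by (auto simp: F'_def rowv_def fun_eq_iff algebra_simps)
      then show ?thesis using Some by (simp add: DL_upd)
    qed
  qed
  ultimately show ?thesis unfolding DL_def by simp
qed

definition hv :: "(nat \<Rightarrow> int) \<Rightarrow> nat \<Rightarrow> nat option \<Rightarrow> real" where
  "hv b r l = (case l of Some h \<Rightarrow> of_nat h | None \<Rightarrow> of_int (b r))"

lemma DL_theta:
  "D2 b r n L x = ((\<Sum>i<n. of_int (b i)) - (\<Sum>j<n. hv b r (L j))) * DL b r n L x - x * D1 b r n L x"
proof -
  let ?f = "\<lambda>j. rowv b r x (L j)"
  have "\<And>j. j < n \<Longrightarrow> (case L j of None \<Rightarrow> 0 | Some h \<Rightarrow> DL b r n (L(j := Some (Suc (Suc h)))) x) =
     dt n (?f(j := (\<lambda>i. (of_int (b i) - hv b r (L j)) * ?f j i))) - x * (case L j of None \<Rightarrow> 0 | Some h \<Rightarrow> DL b r n (L(j := Some (Suc h))) x)"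
  proof -
    fix j assume j: "j < n"
    show "?thesis j"
    proof (cases "L j")
      case None
      have "dt n (?f(j := (\<lambda>i. (of_int (b i) - hv b r (L j)) * ?f j i))) = 0"
        using j None by (intro dt_zero_row[of j]) (auto simp: rowv_def hv_def)
      then show ?thesis using None by simp
    next
      case (Some h)
      define U where "U = (\<lambda>i. (of_int (b i) - hv b r (L j)) * ?f j i)"
      define Wr where "Wr = rowv b r x (Some (Suc h))"
      have eq: "rowv b r x (Some (Suc (Suc h))) = (\<lambda>i. 1 * U i + (-x) * Wr i)"
      proof
        fix i
        have "of_int (b i - int h) * q (b i - int h) x = x * q (b i - int h - 1) x + q (b i - int h - 2) x"
          by (rule q_rec)
        then show "rowv b r x (Some (Suc (Suc h))) i = 1 * U i + (-x) * Wr i"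
          using Some by (simp add: rowv_def hv_def algebra_simps U_def Wr_def)
      qed
      have "DL b r n (L(j := Some (Suc (Suc h)))) x = dt n (?f(j := (\<lambda>i. 1 * U i + (-x) * Wr i)))"
        unfolding DL_upd eq ..
      also have "\<dots> = 1 * dt n (?f(j := U)) + (-x) * dt n (?f(j := Wr))" by (rule dt_row_lin2[OF j])
      finally have "DL b r n (L(j := Some (Suc (Suc h)))) x = dt n (?f(j := U)) - x * dt n (?f(j := Wr))" by simp
      then show ?thesis using Some by (simp add: DL_upd U_def Wr_def)
    qed
  qed
  then have "D2 b r n L x = (\<Sum>j<n. dt n (?f(j := (\<lambda>i. (of_int (b i) - hv b r (L j)) * ?f j i)))) - x * D1 b r n L x"
    unfolding D2_def D1_def by (simp add: sum_subtractf sum_distrib_left)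
  also have "(\<Sum>j<n. dt n (?f(j := (\<lambda>i. (of_int (b i) - hv b r (L j)) * ?f j i)))) =
      ((\<Sum>i<n. of_int (b i)) - (\<Sum>j<n. hv b r (L j))) * dt n ?f"
    by (rule dt_trace)
  finally show ?thesis by (simp add: DL_def)
qed

lemma DL_cong: "(\<And>j. j < n \<Longrightarrow> L j = L' j) \<Longrightarrow> DL b r n L x = DL b r n L' x"
  unfolding DL_def by (intro dt_cong) auto

lemma sum_split3: "n = Suc (Suc (Suc m)) \<Longrightarrow> (\<Sum>j<n. t j) = (\<Sum>j<m. t j) + t m + t (Suc m) + t (Suc (Suc m))"
  by simp

lemma core:
  fixes bb :: "nat \<Rightarrow> int" and s0 :: nat and x :: real
  defines "s \<equiv> Suc s0"
  defines "r \<equiv> Suc s"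
  defines "n \<equiv> Suc r"
  defines "Lab \<equiv> (\<lambda>l1 l2 j. if j < s then Some j else if j = s then l1 else l2)"
  defines "LW \<equiv> Lab (Some s) None" and "LV \<equiv> Lab (Some s) (Some (Suc s))"
  defines "LW1 \<equiv> Lab (Some (Suc s)) None" and "LV1 \<equiv> Lab (Some s) (Some (Suc (Suc s)))"
  shows "D1 bb r n LW1 x * DL bb r n LV x - 2 * D1 bb r n LW x * D1 bb r n LV x + DL bb r n LW x * D1 bb r n LV1 x
     - x * (D1 bb r n LW x * DL bb r n LV x - DL bb r n LW x * D1 bb r n LV x)
     - (of_int (bb r) - of_nat r) * DL bb r n LW x * DL bb r n LV x = 0" (is ?MAIN)
    and "D1 bb r n LW x = DL bb r n LW1 x" (is ?W1)
    and "D1 bb r n LV x = DL bb r n LV1 x" (is ?V1)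
proof -
  let ?D = "\<lambda>L. DL bb r n L x"
  define T where "T = LW1(s0 := Some s)"
  define A where "A = Lab (Some (Suc (Suc s))) None"
  define B where "B = Lab (Some (Suc s)) (Some (Suc (Suc s)))"
  define C where "C = Lab (Some s) (Some (Suc (Suc (Suc s))))"
  have n3: "n = Suc (Suc (Suc s0))" by (simp add: n_def r_def s_def)
  have dupS: "\<And>L j k. j < n \<Longrightarrow> k < n \<Longrightarrow> j \<noteq> k \<Longrightarrow> L j = L k \<Longrightarrow> ?D L = 0"
    by (rule DL_dup)
  have low1: "\<And>l1 l2. (\<Sum>j<s0. case Lab l1 l2 j of None \<Rightarrow> 0 | Some h \<Rightarrow> ?D ((Lab l1 l2)(j := Some (Suc h)))) = 0"
  proof (intro sum.neutral ballI)
    fix l1 l2 j assume j: "j \<in> {..<s0}"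
    then have "Lab l1 l2 j = Some j" by (simp add: Lab_def s_def)
    moreover have "?D ((Lab l1 l2)(j := Some (Suc j))) = 0"
      by (rule dupS[where j=j and k="Suc j"]) (use j in \<open>auto simp: Lab_def s_def n_def r_def\<close>)
    ultimately show "(case Lab l1 l2 j of None \<Rightarrow> 0 | Some h \<Rightarrow> ?D ((Lab l1 l2)(j := Some (Suc h)))) = 0" by simp
  qed
  have low2: "\<And>l2. (\<Sum>j<s0. case Lab (Some s) l2 j of None \<Rightarrow> 0 | Some h \<Rightarrow> ?D ((Lab (Some s) l2)(j := Some (Suc (Suc h))))) = 0"
  proof (intro sum.neutral ballI)
    fix l2 j assume j: "j \<in> {..<s0}"
    then have "Lab (Some s) l2 j = Some j" by (simp add: Lab_def s_def)
    moreover have "?D ((Lab (Some s) l2)(j := Some (Suc (Suc j)))) = 0"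
      by (rule dupS[where j=j and k="Suc (Suc j)"]) (use j in \<open>auto simp: Lab_def s_def n_def r_def\<close>)
    ultimately show "(case Lab (Some s) l2 j of None \<Rightarrow> 0 | Some h \<Rightarrow> ?D ((Lab (Some s) l2)(j := Some (Suc (Suc h))))) = 0" by simp
  qed
  have W1: "D1 bb r n LW x = ?D LW1"
  proof -
    have "D1 bb r n LW x = 0 + ?D (LW(s0 := Some s)) + ?D (LW(s := Some (Suc s))) + 0"
      unfolding D1_def sum_split3[OF n3] LW_def using low1[of "Some s" None]
      by (simp add: Lab_def s_def)
    also have "?D (LW(s0 := Some s)) = 0"
      by (rule dupS[where j=s0 and k=s]) (auto simp: LW_def Lab_def s_def n_def r_def)
    also have "?D (LW(s := Some (Suc s))) = ?D LW1" by (rule DL_cong) (auto simp: LW_def LW1_def Lab_def n_def r_def s_def)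
    finally show ?thesis by simp
  qed
  have W2: "D1 bb r n LW1 x = ?D T + ?D A"
  proof -
    have "D1 bb r n LW1 x = 0 + ?D (LW1(s0 := Some s)) + ?D (LW1(s := Some (Suc (Suc s)))) + 0"
      unfolding D1_def sum_split3[OF n3] LW1_def using low1[of "Some (Suc s)" None]
      by (simp add: Lab_def s_def)
    also have "?D (LW1(s := Some (Suc (Suc s)))) = ?D A" by (rule DL_cong) (auto simp: A_def LW1_def Lab_def n_def r_def s_def)
    finally show ?thesis unfolding T_def by (simp add: fun_upd_def)
  qed
  have WT: "D2 bb r n LW x = - ?D T + ?D A"
  proof -
    have "D2 bb r n LW x = 0 + ?D (LW(s0 := Some (Suc s))) + ?D (LW(s := Some (Suc (Suc s)))) + 0"
      unfolding D2_def sum_split3[OF n3] LW_def using low2[of None]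
      by (simp add: Lab_def s_def)
    also have "?D (LW(s := Some (Suc (Suc s)))) = ?D A" by (rule DL_cong) (auto simp: A_def LW_def Lab_def n_def r_def s_def)
    also have "?D (LW(s0 := Some (Suc s))) = - ?D T"
    proof -
      let ?L = "LW(s0 := Some (Suc s))"
      have "?D (?L(s0 := ?L s, s := ?L s0)) = ?D T"
        by (rule DL_cong) (auto simp: T_def LW_def LW1_def Lab_def s_def n_def r_def)
      moreover have "?D (?L(s0 := ?L s, s := ?L s0)) = - ?D ?L"
        by (rule DL_swap) (auto simp: s_def n_def r_def)
      ultimately show ?thesis by simp
    qed
    finally show ?thesis by simp
  qed
  have V1: "D1 bb r n LV x = ?D LV1"
  proof -
    have "D1 bb r n LV x = 0 + ?D (LV(s0 := Some s)) + ?D (LV(s := Some (Suc s))) + ?D (LV(Suc s := Some (Suc (Suc s))))"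
      unfolding D1_def sum_split3[OF n3] LV_def using low1[of "Some s" "Some (Suc s)"]
      by (simp add: Lab_def s_def)
    also have "?D (LV(s0 := Some s)) = 0"
      by (rule dupS[where j=s0 and k=s]) (auto simp: LV_def Lab_def s_def n_def r_def)
    also have "?D (LV(s := Some (Suc s))) = 0"
      by (rule dupS[where j=s and k="Suc s"]) (auto simp: LV_def Lab_def s_def n_def r_def)
    also have "?D (LV(Suc s := Some (Suc (Suc s)))) = ?D LV1" by (rule DL_cong) (auto simp: LV_def LV1_def Lab_def n_def r_def s_def)
    finally show ?thesis by simp
  qed
  have V2: "D1 bb r n LV1 x = ?D B + ?D C"
  proof -
    have "D1 bb r n LV1 x = 0 + ?D (LV1(s0 := Some s)) + ?D (LV1(s := Some (Suc s))) + ?D (LV1(Suc s := Some (Suc (Suc (Suc s)))))"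
      unfolding D1_def sum_split3[OF n3] LV1_def using low1[of "Some s" "Some (Suc (Suc s))"]
      by (simp add: Lab_def s_def)
    also have "?D (LV1(s0 := Some s)) = 0"
      by (rule dupS[where j=s0 and k=s]) (auto simp: LV1_def Lab_def s_def n_def r_def)
    also have "?D (LV1(s := Some (Suc s))) = ?D B" by (rule DL_cong) (auto simp: LV1_def B_def Lab_def n_def r_def s_def)
    also have "?D (LV1(Suc s := Some (Suc (Suc (Suc s))))) = ?D C" by (rule DL_cong) (auto simp: LV1_def C_def Lab_def n_def r_def s_def)
    finally show ?thesis by simp
  qed
  have VT: "D2 bb r n LV x = - ?D B + ?D C"
  proof -
    have "D2 bb r n LV x = 0 + ?D (LV(s0 := Some (Suc s))) + ?D (LV(s := Some (Suc (Suc s)))) + ?D (LV(Suc s := Some (Suc (Suc (Suc s)))))"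
      unfolding D2_def sum_split3[OF n3] LV_def using low2[of "Some (Suc s)"]
      by (simp add: Lab_def s_def)
    also have "?D (LV(s0 := Some (Suc s))) = 0"
      by (rule dupS[where j=s0 and k="Suc s"]) (auto simp: LV_def Lab_def s_def n_def r_def)
    also have "?D (LV(Suc s := Some (Suc (Suc (Suc s))))) = ?D C" by (rule DL_cong) (auto simp: LV_def C_def Lab_def n_def r_def s_def)
    also have "?D (LV(s := Some (Suc (Suc s)))) = - ?D B"
    proof -
      let ?L = "LV(s := Some (Suc (Suc s)))"
      have "?D (?L(s := ?L (Suc s), Suc s := ?L s)) = ?D B"
        by (rule DL_cong) (auto simp: B_def LV_def Lab_def n_def r_def s_def)
      moreover have "?D (?L(s := ?L (Suc s), Suc s := ?L s)) = - ?D ?L"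
        by (rule DL_swap) (auto simp: s_def n_def r_def)
      ultimately show ?thesis by simp
    qed
    finally show ?thesis by simp
  qed
  define S where "S = (\<Sum>i<n. real_of_int (bb i))"
  define H where "H = (\<Sum>j<s. real j)"
  have hW: "(\<Sum>j<n. hv bb r (LW j)) = H + real s + real_of_int (bb r)"
    unfolding n_def r_def LW_def H_def by (simp add: Lab_def hv_def r_def)
  have hV: "(\<Sum>j<n. hv bb r (LV j)) = H + real s + real (Suc s)"
    unfolding n_def r_def LV_def H_def by (simp add: Lab_def hv_def)
  have thW: "D2 bb r n LW x = (S - (H + real s + real_of_int (bb r))) * ?D LW - x * D1 bb r n LW x"
    using DL_theta[of bb r n LW x] hW by (simp add: S_def)
  have thV: "D2 bb r n LV x = (S - (H + real s + real (Suc s))) * ?D LV - x * D1 bb r n LV x"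
    using DL_theta[of bb r n LV x] hV by (simp add: S_def)
  have pl: "?D LV * ?D A - ?D LV1 * ?D LW1 + ?D LW * ?D B = 0"
  proof -
    define f where "f = (\<lambda>j. rowv bb r x (Some j))"
    define P where "P = (\<lambda>a b. dt (Suc (Suc s)) (f(s := a, Suc s := b)))"
    have nn: "n = Suc (Suc s)" by (simp add: n_def r_def)
    have PL: "\<And>l1 l2. ?D (Lab l1 l2) = P (rowv bb r x l1) (rowv bb r x l2)"
      unfolding DL_def P_def nn
      by (intro dt_cong) (auto simp: Lab_def f_def)
    have "P (rowv bb r x (Some s)) (rowv bb r x (Some (Suc s))) * P (rowv bb r x (Some (Suc (Suc s)))) (rowv bb r x None)
       - P (rowv bb r x (Some s)) (rowv bb r x (Some (Suc (Suc s)))) * P (rowv bb r x (Some (Suc s))) (rowv bb r x None)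
       + P (rowv bb r x (Some s)) (rowv bb r x None) * P (rowv bb r x (Some (Suc s))) (rowv bb r x (Some (Suc (Suc s)))) = 0"
      unfolding P_def by (rule plucker)
    then show ?thesis unfolding LV_def A_def LV1_def LW1_def LW_def B_def PL .
  qed
  have xW: "x * D1 bb r n LW x = (S - (H + real s + real_of_int (bb r))) * ?D LW + ?D T - ?D A"
    using thW WT by simp
  have xV: "x * D1 bb r n LV x = (S - (H + real s + real (Suc s))) * ?D LV + ?D B - ?D C"
    using thV VT by simp
  have e1: "x * (D1 bb r n LW x * ?D LV - ?D LW * D1 bb r n LV x) = (x * D1 bb r n LW x) * ?D LV - ?D LW * (x * D1 bb r n LV x)"
    by (simp add: algebra_simps)
  have X: "x * (D1 bb r n LW x * ?D LV - ?D LW * D1 bb r n LV x) =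
      ((S - (H + real s + real_of_int (bb r))) * ?D LW + ?D T - ?D A) * ?D LV
      - ?D LW * ((S - (H + real s + real (Suc s))) * ?D LV + ?D B - ?D C)"
    unfolding e1 xW xV ..
  have Y: "D1 bb r n LW1 x * DL bb r n LV x - 2 * D1 bb r n LW x * D1 bb r n LV x + DL bb r n LW x * D1 bb r n LV1 x
     - x * (D1 bb r n LW x * DL bb r n LV x - DL bb r n LW x * D1 bb r n LV x)
     - (of_int (bb r) - of_nat r) * DL bb r n LW x * DL bb r n LV x
     = (?D T + ?D A) * ?D LV - 2 * ?D LW1 * ?D LV1 + ?D LW * (?D B + ?D C)
      - (((S - (H + real s + real_of_int (bb r))) * ?D LW + ?D T - ?D A) * ?D LV
      - ?D LW * ((S - (H + real s + real (Suc s))) * ?D LV + ?D B - ?D C))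
     - (of_int (bb r) - of_nat r) * ?D LW * ?D LV"
    unfolding X unfolding W2 V2 W1 V1 ..
  also have "\<dots> = 2 * (?D LV * ?D A - ?D LV1 * ?D LW1 + ?D LW * ?D B)"
    by (simp add: r_def algebra_simps)
  also have "\<dots> = 0" using pl by simp
  finally show ?MAIN .
  show ?W1 by (rule W1)
  show ?V1 by (rule V1)
qed

lemma hirota_eq:
  assumes "\<And>y. (W has_real_derivative W1 y) (at y)" "\<And>y. (W1 has_real_derivative W2 y) (at y)"
    "\<And>y. (V has_real_derivative V1 y) (at y)" "\<And>y. (V1 has_real_derivative V2 y) (at y)"
  shows "hirota c (\<lambda>y. a * W y) (\<lambda>y. b * V y) x =
    a * b * (W2 x * V x - 2 * W1 x * V1 x + W x * V2 x - x * (W1 x * V x - W x * V1 x) - c * W x * V x)"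
proof -
  have dW: "deriv (\<lambda>y. a * W y) = (\<lambda>y. a * W1 y)"
    using assms(1) by (intro ext DERIV_imp_deriv DERIV_cmult)
  have dW1: "deriv (\<lambda>y. a * W1 y) = (\<lambda>y. a * W2 y)"
    using assms(2) by (intro ext DERIV_imp_deriv DERIV_cmult)
  have dV: "deriv (\<lambda>y. b * V y) = (\<lambda>y. b * V1 y)"
    using assms(3) by (intro ext DERIV_imp_deriv DERIV_cmult)
  have dV1: "deriv (\<lambda>y. b * V1 y) = (\<lambda>y. b * V2 y)"
    using assms(4) by (intro ext DERIV_imp_deriv DERIV_cmult)
  show ?thesis unfolding hirota_def dW dW1 dV dV1 by (simp add: algebra_simps)
qed

lemma core2:
  fixes bb :: "nat \<Rightarrow> int" and r :: nat
  assumes r2: "r \<ge> 2"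
  shows "hirota (of_int (bb r) - of_nat r) (\<lambda>y. a * dt r (\<lambda>j i. q (bb i - int j) y))
      (\<lambda>y. b * dt (Suc r) (\<lambda>j i. q (bb i - int j) y)) x = 0"
proof -
  obtain s0 where r: "r = Suc (Suc s0)" using r2 by (metis add_2_eq_Suc le_Suc_ex)
  define s where "s = Suc s0"
  define n where "n = Suc r"
  define Lab where "Lab = (\<lambda>l1 l2 j. if j < s then Some j else if j = s then l1 else (l2::nat option))"
  define LW where "LW = Lab (Some s) None"
  define LV where "LV = Lab (Some s) (Some (Suc s))"
  define LW1 where "LW1 = Lab (Some (Suc s)) None"
  define LV1 where "LV1 = Lab (Some s) (Some (Suc (Suc s)))"
  note C = core[of bb s0, folded s_def, folded r[unfolded s_def[symmetric]], folded n_def Lab_def,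
     folded LW_def LV_def LW1_def LV1_def]
  have rs: "r = Suc s" by (simp add: r s_def)
  have eW: "\<And>y. dt r (\<lambda>j i. q (bb i - int j) y) = DL bb r n LW y"
  proof -
    fix y
    have "DL bb r n LW y = dt (Suc r) (\<lambda>j. rowv bb r y (LW j))" by (simp add: DL_def n_def)
    also have "\<dots> = dt r (\<lambda>j. rowv bb r y (LW j))"
      by (rule dt_lastrow) (auto simp: LW_def Lab_def rowv_def rs)
    also have "\<dots> = dt r (\<lambda>j i. q (bb i - int j) y)"
      by (intro dt_cong) (auto simp: LW_def Lab_def rowv_def rs less_Suc_eq)
    finally show "?thesis y" by simp
  qed
  have eV: "\<And>y. dt (Suc r) (\<lambda>j i. q (bb i - int j) y) = DL bb r n LV y"
    unfolding DL_def n_def by (intro dt_cong) (auto simp: LV_def Lab_def rowv_def rs less_Suc_eq)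
  have fW: "(\<lambda>y. dt r (\<lambda>j i. q (bb i - int j) y)) = DL bb r n LW" using eW by auto
  have fV: "(\<lambda>y. dt (Suc r) (\<lambda>j i. q (bb i - int j) y)) = DL bb r n LV" using eV by auto
  have gW: "D1 bb r n LW = DL bb r n LW1"
    by (rule ext) (use C(2) in \<open>simp add: LW_def LW1_def Lab_def rs[symmetric] n_def[symmetric]\<close>)
  have gV: "D1 bb r n LV = DL bb r n LV1"
    by (rule ext) (use C(3) in \<open>simp add: LV_def LV1_def Lab_def rs[symmetric] n_def[symmetric]\<close>)
  have d1: "\<And>y. (DL bb r n LW has_real_derivative D1 bb r n LW y) (at y)" using DL_deriv by blast
  have d2: "\<And>y. (D1 bb r n LW has_real_derivative D1 bb r n LW1 y) (at y)" unfolding gW using DL_deriv by blast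
  have d3: "\<And>y. (DL bb r n LV has_real_derivative D1 bb r n LV y) (at y)" using DL_deriv by blast
  have d4: "\<And>y. (D1 bb r n LV has_real_derivative D1 bb r n LV1 y) (at y)" unfolding gV using DL_deriv by blast
  have "hirota (of_int (bb r) - of_nat r) (\<lambda>y. a * DL bb r n LW y) (\<lambda>y. b * DL bb r n LV y) x =
     a * b * (D1 bb r n LW1 x * DL bb r n LV x - 2 * D1 bb r n LW x * D1 bb r n LV x + DL bb r n LW x * D1 bb r n LV1 x
     - x * (D1 bb r n LW x * DL bb r n LV x - DL bb r n LW x * D1 bb r n LV x)
     - (of_int (bb r) - of_nat r) * DL bb r n LW x * DL bb r n LV x)"
    by (rule hirota_eq[OF d1 d2 d3 d4])
  also have "\<dots> = 0" using C(1) by (simp add: LW_def LW1_def LV_def LV1_def Lab_def rs[symmetric] n_def[symmetric])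
  finally show ?thesis by (simp only: eW eV)
qed

lemma int_Sup:
  fixes X :: "int set"
  assumes "x \<in> X" "\<And>y. y \<in> X \<Longrightarrow> y < u"
  shows "Sup X \<in> X \<and> (\<forall>y\<in>X. y \<le> Sup X)"
proof -
  let ?Y = "X \<inter> {x..u}"
  have fin: "finite ?Y" by simp
  have ne: "?Y \<noteq> {}" using assms by fastforce
  define m where "m = Max ?Y"
  have mY: "m \<in> ?Y" using Max_in[OF fin ne] m_def by simp
  have ub: "\<forall>y\<in>X. y \<le> m"
  proof
    fix y assume y: "y \<in> X"
    show "y \<le> m"
    proof (cases "x \<le> y")
      case True
      then have "y \<in> ?Y" using y assms(2)[OF y] by auto
      then show ?thesis unfolding m_def by (rule Max_ge[OF fin])
    next
      case False
      have "x \<in> ?Y" using assms by fastforce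
      then have "x \<le> m" unfolding m_def using fin by (intro Max_ge)
      then show ?thesis using False by simp
    qed
  qed
  have "Sup X = m" by (rule cSup_eq_maximum) (use mY ub in auto)
  then show ?thesis using mY ub by simp
qed

locale mayad =
  fixes M :: "int set" and lo hi :: int
  assumes lo: "\<And>k. k < lo \<Longrightarrow> k \<in> M" and hi: "\<And>k. k \<in> M \<Longrightarrow> k < hi"
begin

lemma fin_above: "finite {k\<in>M. m < k}"
proof -
  have "{k\<in>M. m < k} \<subseteq> {m<..<hi}" using hi by auto
  then show ?thesis by (rule finite_subset) simp
qed

lemma Sup_below:
  assumes "m \<in> M"
  shows "Sup {k\<in>M. k < m} \<in> {k\<in>M. k < m} \<and> (\<forall>y\<in>{k\<in>M. k < m}. y \<le> Sup {k\<in>M. k < m})"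
proof (rule int_Sup)
  show "min lo m - 1 \<in> {k \<in> M. k < m}" using lo by auto
qed auto

lemma ms0: "maya_seq M 0 \<in> M \<and> (\<forall>y\<in>M. y \<le> maya_seq M 0)"
  using int_Sup[of "lo - 1" M hi] lo hi by auto

lemma ms_props: "maya_seq M i \<in> M \<and> card {k\<in>M. maya_seq M i < k} = i"
proof (induction i)
  case 0
  have "{k\<in>M. maya_seq M 0 < k} = {}" using ms0 by force
  then have "card {k\<in>M. maya_seq M 0 < k} = 0" by (simp only: card.empty)
  then show ?case using ms0 by blast
next
  case (Suc i)
  let ?m = "maya_seq M i"
  have S: "maya_seq M (Suc i) \<in> {k\<in>M. k < ?m} \<and> (\<forall>y\<in>{k\<in>M. k < ?m}. y \<le> maya_seq M (Suc i))"
    using Sup_below[of ?m] Suc.IH by simp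
  have no: "\<And>k. k \<in> M \<Longrightarrow> maya_seq M (Suc i) < k \<Longrightarrow> k < ?m \<Longrightarrow> False"
    using S by (force simp del: maya_seq.simps)
  have eq: "{k\<in>M. maya_seq M (Suc i) < k} = insert ?m {k\<in>M. ?m < k}"
    using no S Suc.IH by (auto simp del: maya_seq.simps)
  have "card {k\<in>M. maya_seq M (Suc i) < k} = Suc i"
    unfolding eq using fin_above[of ?m] Suc.IH by simp
  then show ?case using S by simp
qed

lemma ms_dec: "maya_seq M (Suc i) < maya_seq M i"
  using Sup_below[of "maya_seq M i"] ms_props[of i] by simp

lemma ms_strict: "i < j \<Longrightarrow> maya_seq M j < maya_seq M i"
proof (induction j)
  case 0 then show ?case by simp
next
  case (Suc j)
  then show ?case using ms_dec[of j] by (cases "i = j") auto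
qed

lemma ms_dist: "i \<le> j \<Longrightarrow> maya_seq M j + int (j - i) \<le> maya_seq M i"
proof (induction j)
  case 0 then show ?case by simp
next
  case (Suc j)
  show ?case
  proof (cases "i = Suc j")
    case True then show ?thesis by simp
  next
    case False
    then have "i \<le> j" using Suc.prems by simp
    then show ?thesis using Suc.IH ms_dec[of j] by (simp add: Suc_diff_le)
  qed
qed

end

locale mayaL = mayad +
  fixes L :: int
  assumes L: "L \<le> lo"
begin

definition T where "T = {k\<in>M. L \<le> k}"
definition r where "r = card T"

lemma T_fin: "finite T"
proof -
  have "T \<subseteq> {L..<hi}" using hi by (auto simp: T_def)
  then show ?thesis by (rule finite_subset) simp
qed

lemma ms_ge: "i < r \<Longrightarrow> L \<le> maya_seq M i"
proof (rule ccontr)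
  assume i: "i < r" and "\<not> L \<le> maya_seq M i"
  then have "T \<subseteq> {k\<in>M. maya_seq M i < k}" by (auto simp: T_def)
  then have "r \<le> card {k\<in>M. maya_seq M i < k}" unfolding r_def using fin_above by (rule card_mono[rotated])
  then show False using ms_props[of i] i by simp
qed

lemma ms_tail: "r \<le> i \<Longrightarrow> maya_seq M i = L - 1 - int (i - r)"
proof -
  assume i: "r \<le> i"
  let ?m = "maya_seq M i"
  have mL: "?m < L"
  proof (rule ccontr)
    assume "\<not> ?m < L"
    then have mT: "?m \<in> T" using ms_props[of i] by (auto simp: T_def)
    have "{k\<in>M. ?m < k} \<subseteq> T - {?m}" using \<open>\<not> ?m < L\<close> by (auto simp: T_def)
    then have "card {k\<in>M. ?m < k} \<le> card (T - {?m})" using T_fin by (intro card_mono) auto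
    also have "\<dots> < r" unfolding r_def using T_fin mT by (rule card_Diff1_less)
    finally show False using ms_props[of i] i by simp
  qed
  have eq: "{k\<in>M. ?m < k} = T \<union> {?m<..<L}"
    using mL lo L by (auto simp: T_def)
  have "i = card (T \<union> {?m<..<L})" using ms_props[of i] eq by simp
  also have "\<dots> = r + card {?m<..<L}" unfolding r_def
    by (rule card_Un_disjoint) (use T_fin in \<open>auto simp: T_def\<close>)
  also have "card {?m<..<L} = nat (L - ?m - 1)" by simp
  finally have "i = r + nat (L - ?m - 1)" .
  then show ?thesis using mL by auto
qed

lemma charge: "maya_charge M = L + int r"
  unfolding maya_charge_def
proof (rule the_equality)
  show "\<exists>N. \<forall>i\<ge>N. maya_seq M i + int (i + 1) = L + int r"
    by (rule exI[of _ r]) (auto simp: ms_tail)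
next
  fix c assume "\<exists>N. \<forall>i\<ge>N. maya_seq M i + int (i + 1) = c"
  then obtain N where N: "\<And>i. i \<ge> N \<Longrightarrow> maya_seq M i + int (i + 1) = c" by blast
  have "maya_seq M (max N r) + int (max N r + 1) = c" using N by simp
  moreover have "maya_seq M (max N r) = L - 1 - int (max N r - r)" by (rule ms_tail) simp
  ultimately show "c = L + int r" by auto
qed

definition bb where "bb i = maya_seq M i - L"

lemma part_eq: "1 \<le> i \<Longrightarrow> maya_part M i = maya_seq M (i - 1) + int i - (L + int r)"
  by (simp add: maya_part_def charge)

lemma part_zero: "r < i \<Longrightarrow> maya_part M i = 0"
  using ms_tail[of "i - 1"] by (simp add: part_eq)

lemma part_mono: "1 \<le> i \<Longrightarrow> maya_part M (Suc i) \<le> maya_part M i"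
  using ms_dec[of "i - 1"] by (simp add: part_eq)

lemma part_nonneg: "1 \<le> i \<Longrightarrow> 0 \<le> maya_part M i"
proof -
  assume i: "1 \<le> i"
  define R where "R = max (i - 1) r"
  have "maya_seq M R + int (R - (i - 1)) \<le> maya_seq M (i - 1)" by (rule ms_dist) (simp add: R_def)
  moreover have "maya_seq M R = L - 1 - int (R - r)" by (rule ms_tail) (simp add: R_def)
  ultimately show ?thesis using i by (simp add: part_eq R_def)
qed

lemma part_downclosed: "1 \<le> j \<Longrightarrow> j \<le> i \<Longrightarrow> maya_part M i \<noteq> 0 \<Longrightarrow> maya_part M j \<noteq> 0"
proof (induction i)
  case 0 then show ?case by simp
next
  case (Suc i)
  show ?case
  proof (cases "j = Suc i")
    case True then show ?thesis using Suc by simp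
  next
    case False
    then have "j \<le> i" "1 \<le> i" using Suc.prems by auto
    moreover have "maya_part M i \<noteq> 0"
      using part_mono[of i] part_nonneg[of "Suc i"] Suc.prems \<open>1 \<le> i\<close> by auto
    ultimately show ?thesis using Suc.IH Suc.prems by simp
  qed
qed

lemma plen: "part_length (maya_part M) \<le> r \<and>
  (\<forall>i\<ge>1. maya_part M i \<noteq> 0 \<longleftrightarrow> i \<le> part_length (maya_part M))"
proof -
  define Z where "Z = {i. 1 \<le> i \<and> maya_part M i \<noteq> 0}"
  have memZ: "\<And>i. 1 \<le> i \<Longrightarrow> (maya_part M i \<noteq> 0 \<longleftrightarrow> i \<in> Z)" by (simp add: Z_def)
  have Z1: "\<And>i. i \<in> Z \<Longrightarrow> 1 \<le> i" by (simp add: Z_def)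
  have Zr: "Z \<subseteq> {1..r}"
  proof
    fix i assume "i \<in> Z"
    then have "1 \<le> i" "maya_part M i \<noteq> 0" by (auto simp: Z_def)
    then have "\<not> r < i" using part_zero by blast
    then show "i \<in> {1..r}" using \<open>1 \<le> i\<close> by simp
  qed
  then have finZ: "finite Z" by (rule finite_subset) simp
  have plZ: "part_length (maya_part M) = card Z" by (simp add: part_length_def Z_def)
  show ?thesis
  proof (cases "Z = {}")
    case True
    then have "part_length (maya_part M) = 0" by (simp add: plZ)
    moreover have "\<forall>i\<ge>1. \<not> (maya_part M i \<noteq> 0)" using memZ True by blast
    ultimately show ?thesis by simp
  next
    case False
    define m where "m = Max Z"
    have mZ: "m \<in> Z" using Max_in[OF finZ False] by (simp add: m_def)
    have Zeq: "Z = {1..m}"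
    proof
      show "Z \<subseteq> {1..m}"
      proof
        fix i assume i: "i \<in> Z"
        have "i \<le> m" unfolding m_def by (rule Max_ge[OF finZ i])
        then show "i \<in> {1..m}" using Z1[OF i] by simp
      qed
      show "{1..m} \<subseteq> Z"
      proof
        fix i assume i: "i \<in> {1..m}"
        have m1: "1 \<le> m" "maya_part M m \<noteq> 0" using mZ by (auto simp: Z_def)
        have "maya_part M i \<noteq> 0" by (rule part_downclosed[of i m]) (use i m1 in auto)
        then show "i \<in> Z" using i by (simp add: Z_def)
      qed
    qed
    then have pl: "part_length (maya_part M) = m" by (simp add: plZ)
    have "m \<le> r" using Zr mZ by auto
    moreover have "\<forall>i\<ge>1. maya_part M i \<noteq> 0 \<longleftrightarrow> i \<le> m"
    proof (intro allI impI)
      fix i :: nat assume "1 \<le> i"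
      then show "maya_part M i \<noteq> 0 \<longleftrightarrow> i \<le> m" using memZ[of i] Zeq by simp
    qed
    ultimately show ?thesis using pl by simp
  qed
qed

lemma schur_dt: "schur (maya_part M) (tx x) =
   dt (part_length (maya_part M)) (\<lambda>i j. q (maya_part M (i + 1) - int (i + 1) + int (j + 1)) x)"
  unfolding schur_def Let_def dt_def q_def by simp

lemma pad: "part_length (maya_part M) \<le> K \<Longrightarrow>
   dt K (\<lambda>i j. q (maya_part M (i + 1) - int (i + 1) + int (j + 1)) x) =
   dt (part_length (maya_part M)) (\<lambda>i j. q (maya_part M (i + 1) - int (i + 1) + int (j + 1)) x)"
proof (induction K)
  case 0 then show ?case by simp
next
  case (Suc K)
  show ?case
  proof (cases "part_length (maya_part M) \<le> K")
    case True
    have "maya_part M (Suc K) = 0" using plen[THEN conjunct2, rule_format, of "Suc K"] True by simp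
    then have "dt (Suc K) (\<lambda>i j. q (maya_part M (i + 1) - int (i + 1) + int (j + 1)) x) =
       dt K (\<lambda>i j. q (maya_part M (i + 1) - int (i + 1) + int (j + 1)) x)"
      by (intro dt_lastrow) (auto simp: q_neg q_0)
    then show ?thesis using Suc.IH True by simp
  next
    case False
    then have "part_length (maya_part M) = Suc K" using Suc.prems by simp
    then show ?thesis by simp
  qed
qed

lemma schur_W: "\<exists>\<sigma>::real. (\<sigma> = 1 \<or> \<sigma> = -1) \<and>
   (\<forall>x. schur (maya_part M) (tx x) = \<sigma> * dt r (\<lambda>j i. q (bb i - int j) x))"
proof -
  define p where "p = (\<lambda>j::nat. if j < r then r - 1 - j else j)"
  have p: "p permutes {0..<r}"
  proof -
    have "bij_betw p {0..<r} {0..<r}"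
    proof (rule bij_betw_imageI)
      show "inj_on p {0..<r}" by (auto simp: p_def inj_on_def)
      show "p ` {0..<r} = {0..<r}"
      proof
        show "p ` {0..<r} \<subseteq> {0..<r}" by (auto simp: p_def)
        show "{0..<r} \<subseteq> p ` {0..<r}"
        proof
          fix j assume j: "j \<in> {0..<r}"
          then have "j = p (r - 1 - j)" by (auto simp: p_def)
          moreover have "r - 1 - j \<in> {0..<r}" using j by auto
          ultimately show "j \<in> p ` {0..<r}" by blast
        qed
      qed
    qed
    then show ?thesis by (rule bij_imp_permutes) (auto simp: p_def)
  qed
  have "\<forall>x. schur (maya_part M) (tx x) = signof p * dt r (\<lambda>j i. q (bb i - int j) x)"
  proof
    fix x
    have "schur (maya_part M) (tx x) = dt (part_length (maya_part M)) (\<lambda>i j. q (maya_part M (i + 1) - int (i + 1) + int (j + 1)) x)"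
      by (rule schur_dt)
    also have "\<dots> = dt r (\<lambda>i j. q (maya_part M (i + 1) - int (i + 1) + int (j + 1)) x)"
      by (rule pad[symmetric]) (use plen in blast)
    also have "\<dots> = dt r (\<lambda>j i. q (maya_part M (i + 1) - int (i + 1) + int (j + 1)) x)"
      by (rule dt_transpose)
    also have "\<dots> = dt r (\<lambda>j. (\<lambda>j i. q (bb i - int j) x) (p j))"
    proof (rule dt_cong)
      fix j i assume j: "j < r" and i: "i < r"
      have e0: "maya_part M (i + 1) = maya_seq M i + int (i + 1) - (L + int r)" by (simp add: part_eq)
      have e1: "p j = r - 1 - j" using j by (simp add: p_def)
      have e2: "int (r - 1 - j) = int r - 1 - int j" using j by auto
      have "maya_part M (i + 1) - int (i + 1) + int (j + 1) = bb i - int (p j)"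
        unfolding e0 e1 e2 bb_def by simp
      then show "q (maya_part M (i + 1) - int (i + 1) + int (j + 1)) x = (\<lambda>j i. q (bb i - int j) x) (p j) i"
        by simp
    qed
    also have "\<dots> = signof p * dt r (\<lambda>j i. q (bb i - int j) x)"
      by (rule dt_perm_rows[OF p])
    finally show "schur (maya_part M) (tx x) = signof p * dt r (\<lambda>j i. q (bb i - int j) x)" .
  qed
  moreover have "signof p = (1::real) \<or> signof p = (-1::real)"
    using signof_pm_one[of p] by auto
  ultimately show ?thesis by blast
qed

lemma ms_inj: "inj_on (maya_seq M) A"
proof (rule inj_onI)
  fix i j assume "maya_seq M i = maya_seq M j"
  then show "i = j" using ms_strict[of i j] ms_strict[of j i] by (cases "i < j"; cases "j < i") auto
qed

lemma ms_img: "maya_seq M ` {0..<r} = T"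
proof (rule card_subset_eq[OF T_fin])
  show "maya_seq M ` {0..<r} \<subseteq> T" using ms_ge ms_props by (auto simp: T_def)
  show "card (maya_seq M ` {0..<r}) = card T"
    using card_image[OF ms_inj[of "{0..<r}"]] by (simp add: r_def)
qed

end

lemma perm_exists:
  fixes n :: nat
  assumes "inj_on f {0..<n}" "inj_on g {0..<n}" "f ` {0..<n} = g ` {0..<n}"
  shows "\<exists>p. p permutes {0..<n} \<and> (\<forall>i<n. g (p i) = f i)"
proof -
  define p where "p = (\<lambda>i. if i < n then inv_into {0..<n} g (f i) else i)"
  have bg: "bij_betw (inv_into {0..<n} g) (g ` {0..<n}) {0..<n}"
    by (rule bij_betw_inv_into) (use assms(2) in \<open>simp add: bij_betw_def\<close>)
  have bf: "bij_betw f {0..<n} (g ` {0..<n})"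
    using assms(1,3) by (simp add: bij_betw_def)
  have "bij_betw (inv_into {0..<n} g \<circ> f) {0..<n} {0..<n}" by (rule bij_betw_trans[OF bf bg])
  moreover have "\<And>a. a \<in> {0..<n} \<Longrightarrow> (inv_into {0..<n} g \<circ> f) a = p a" by (simp add: p_def)
  ultimately have "bij_betw p {0..<n} {0..<n}" using bij_betw_cong by blast
  then have pp: "p permutes {0..<n}" by (rule bij_imp_permutes) (auto simp: p_def)
  have "\<forall>i<n. g (p i) = f i"
  proof (intro allI impI)
    fix i assume i: "i < n"
    have "f i \<in> g ` {0..<n}" using assms(3) i by auto
    then show "g (p i) = f i" using i by (simp add: p_def f_inv_into_f)
  qed
  with pp show ?thesis by blast
qed

lemma GEN:
  assumes Md: "mayad M lo hi" and k0: "k0 \<notin> M"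
  shows "hirota (of_int (k0 - maya_charge M)) (\<lambda>x. schur (maya_part M) (tx x))
            (\<lambda>x. schur (maya_part (insert k0 M)) (tx x)) x = 0"
proof -
  define L where "L = min lo k0 - 2"
  interpret A: mayaL M lo hi L
    by (rule mayaL.intro[OF Md]) (unfold_locales, simp add: L_def)
  have Bd: "mayad (insert k0 M) lo (max hi (k0 + 1))"
  proof
    fix k assume "k < lo" then show "k \<in> insert k0 M" using A.lo by simp
  next
    fix k assume "k \<in> insert k0 M" then show "k < max hi (k0 + 1)" using A.hi by (auto simp: less_max_iff_disj)
  qed
  interpret B: mayaL "insert k0 M" lo "max hi (k0 + 1)" L
    by (rule mayaL.intro[OF Bd]) (unfold_locales, simp add: L_def)
  let ?r = A.r
  have Lk: "L \<le> k0" by (simp add: L_def)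
  have TB: "B.T = insert k0 A.T" using Lk by (auto simp: A.T_def B.T_def)
  have k0T: "k0 \<notin> A.T" using k0 by (simp add: A.T_def)
  have rB: "B.r = Suc ?r" using TB k0T A.T_fin by (simp add: B.r_def A.r_def)
  have r2: "?r \<ge> 2"
  proof -
    have "L < lo" "L + 1 < lo" by (auto simp: L_def)
    then have "{L, L + 1} \<subseteq> A.T" using A.lo by (auto simp: A.T_def)
    then have "card {L, L + 1} \<le> ?r" unfolding A.r_def by (rule card_mono[OF A.T_fin])
    then show ?thesis by simp
  qed
  obtain \<sigma>1 :: real where s1: "\<And>x. schur (maya_part M) (tx x) = \<sigma>1 * dt ?r (\<lambda>j i. q (A.bb i - int j) x)"
    using A.schur_W by blast
  obtain \<sigma>2 :: real where s2: "\<And>x. schur (maya_part (insert k0 M)) (tx x) = \<sigma>2 * dt (Suc ?r) (\<lambda>j i. q (B.bb i - int j) x)"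
    using B.schur_W rB by auto
  define cc where "cc = (\<lambda>i. if i < ?r then A.bb i else k0 - L)"
  have imgB: "B.bb ` {0..<Suc ?r} = (\<lambda>k. k - L) ` insert k0 A.T"
  proof -
    have "B.bb ` {0..<Suc ?r} = (\<lambda>k. k - L) ` (maya_seq (insert k0 M) ` {0..<B.r})"
      by (simp add: B.bb_def image_image rB)
    then show ?thesis using B.ms_img TB by simp
  qed
  have imgC: "cc ` {0..<Suc ?r} = (\<lambda>k. k - L) ` insert k0 A.T"
  proof -
    have "{0..<Suc ?r} = insert ?r {0..<?r}" by auto
    then have "cc ` {0..<Suc ?r} = insert (k0 - L) (A.bb ` {0..<?r})"
      by (auto simp: cc_def)
    also have "A.bb ` {0..<?r} = (\<lambda>k. k - L) ` (maya_seq M ` {0..<?r})"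
      by (simp add: A.bb_def image_image)
    finally show ?thesis using A.ms_img by simp
  qed
  have injB: "inj_on B.bb {0..<Suc ?r}"
    using B.ms_inj[of "{0..<Suc ?r}"] by (auto simp: inj_on_def B.bb_def)
  have injC: "inj_on cc {0..<Suc ?r}"
  proof (rule inj_onI)
    fix i j assume i: "i \<in> {0..<Suc ?r}" and j: "j \<in> {0..<Suc ?r}" and e: "cc i = cc j"
    have mem: "\<And>a. a < ?r \<Longrightarrow> maya_seq M a \<noteq> k0" using A.ms_props k0 by metis
    show "i = j"
    proof (cases "i < ?r"; cases "j < ?r")
      assume "i < ?r" "j < ?r"
      then show ?thesis using e A.ms_inj[of UNIV] by (auto simp: cc_def A.bb_def inj_on_def)
    next
      assume "i < ?r" "\<not> j < ?r"
      then show ?thesis using e mem[of i] by (auto simp: cc_def A.bb_def)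
    next
      assume "\<not> i < ?r" "j < ?r"
      then show ?thesis using e mem[of j] by (auto simp: cc_def A.bb_def)
    next
      assume "\<not> i < ?r" "\<not> j < ?r"
      then show ?thesis using i j by auto
    qed
  qed
  obtain p where p: "p permutes {0..<Suc ?r}" and pcc: "\<And>i. i < Suc ?r \<Longrightarrow> cc (p i) = B.bb i"
    using perm_exists[OF injB injC] imgB imgC by auto
  have eV: "\<And>x. dt (Suc ?r) (\<lambda>j i. q (B.bb i - int j) x) = signof p * dt (Suc ?r) (\<lambda>j i. q (cc i - int j) x)"
  proof -
    fix x
    have "dt (Suc ?r) (\<lambda>j i. q (B.bb i - int j) x) = dt (Suc ?r) (\<lambda>j i. (\<lambda>j i. q (cc i - int j) x) j (p i))"
      by (rule dt_cong) (simp add: pcc)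
    also have "\<dots> = signof p * dt (Suc ?r) (\<lambda>j i. q (cc i - int j) x)" by (rule dt_perm_cols[OF p])
    finally show "?thesis x" .
  qed
  have eW: "\<And>x. dt ?r (\<lambda>j i. q (A.bb i - int j) x) = dt ?r (\<lambda>j i. q (cc i - int j) x)"
    by (rule dt_cong) (simp add: cc_def)
  have F: "(\<lambda>x. schur (maya_part M) (tx x)) = (\<lambda>y. \<sigma>1 * dt ?r (\<lambda>j i. q (cc i - int j) y))"
    using s1 eW by simp
  have G: "(\<lambda>x. schur (maya_part (insert k0 M)) (tx x)) = (\<lambda>y. (\<sigma>2 * signof p) * dt (Suc ?r) (\<lambda>j i. q (cc i - int j) y))"
    using s2 eV by (simp add: mult.assoc)
  have c: "of_int (k0 - maya_charge M) = of_int (cc ?r) - (of_nat ?r :: real)"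
    by (simp add: A.charge cc_def)
  show ?thesis unfolding F G c by (rule core2[OF r2])
qed

definition M3 :: "int \<Rightarrow> int \<Rightarrow> int \<Rightarrow> int set" where
  "M3 a b c = ((\<lambda>k. 3 * k) ` D_set a) \<union> ((\<lambda>k. 3 * k + 1) ` D_set b) \<union> ((\<lambda>k. 3 * k + 2) ` D_set c)"

lemma M_mn_M3: "M_mn m n = M3 m n 0"
  by (simp add: M_mn_def M3_def)

lemma M3_mem: "k \<in> M3 a b c \<longleftrightarrow>
   (k mod 3 = 0 \<and> k div 3 < a) \<or> (k mod 3 = 1 \<and> k div 3 < b) \<or> (k mod 3 = 2 \<and> k div 3 < c)"
proof
  assume "k \<in> M3 a b c"
  then show "(k mod 3 = 0 \<and> k div 3 < a) \<or> (k mod 3 = 1 \<and> k div 3 < b) \<or> (k mod 3 = 2 \<and> k div 3 < c)"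
    by (auto simp: M3_def D_set_def)
next
  assume h: "(k mod 3 = 0 \<and> k div 3 < a) \<or> (k mod 3 = 1 \<and> k div 3 < b) \<or> (k mod 3 = 2 \<and> k div 3 < c)"
  have k: "k = 3 * (k div 3) + k mod 3" by simp
  show "k \<in> M3 a b c"
  proof (cases "k mod 3 = 0")
    case True
    then have "k = 3 * (k div 3)" using k by simp
    moreover have "k div 3 \<in> D_set a" using h True by (auto simp: D_set_def)
    ultimately show ?thesis unfolding M3_def by blast
  next
    case F: False
    show ?thesis
    proof (cases "k mod 3 = 1")
      case True
      then have "k = 3 * (k div 3) + 1" using k by simp
      moreover have "k div 3 \<in> D_set b" using h True by (auto simp: D_set_def)
      ultimately show ?thesis unfolding M3_def by blast
    next
      case False
      then have "k mod 3 = 2" using F h by auto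
      then have "k = 3 * (k div 3) + 2" using k by simp
      moreover have "k div 3 \<in> D_set c" using h \<open>k mod 3 = 2\<close> by (auto simp: D_set_def)
      ultimately show ?thesis unfolding M3_def by blast
    qed
  qed
qed

lemma M3_mayad: "mayad (M3 a b c) (3 * min a (min b c)) (3 * max a (max b c))"
proof
  fix k assume "k < 3 * min a (min b c)"
  then show "k \<in> M3 a b c" unfolding M3_mem by (simp add: min_def split: if_splits; presburger)
next
  fix k assume "k \<in> M3 a b c"
  then show "k < 3 * max a (max b c)" unfolding M3_mem by (simp add: max_def split: if_splits; presburger)
qed

lemma img_mod3:
  fixes rho :: int
  assumes "0 \<le> rho" "rho < 3"
  shows "x \<in> (\<lambda>q. 3 * q + rho) ` {K..<a} \<longleftrightarrow> x mod 3 = rho \<and> K \<le> x div 3 \<and> x div 3 < a"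
proof
  assume "x \<in> (\<lambda>q. 3 * q + rho) ` {K..<a}"
  then obtain q where q: "K \<le> q" "q < a" "x = 3 * q + rho" by auto
  have "x div 3 = q" "x mod 3 = rho" using q(3) assms by auto
  then show "x mod 3 = rho \<and> K \<le> x div 3 \<and> x div 3 < a" using q by simp
next
  assume h: "x mod 3 = rho \<and> K \<le> x div 3 \<and> x div 3 < a"
  have "x = 3 * (x div 3) + rho" using h by (metis div_mult_mod_eq mult.commute)
  then show "x \<in> (\<lambda>q. 3 * q + rho) ` {K..<a}" using h by (intro image_eqI[of _ _ "x div 3"]) auto
qed

lemma M3_charge: "maya_charge (M3 a b c) = a + b + c"
proof -
  define K where "K = min a (min b c)"
  interpret A: mayaL "M3 a b c" "3 * K" "3 * max a (max b c)" "3 * K"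
    by (rule mayaL.intro) (use M3_mayad[of a b c] in \<open>simp_all add: K_def mayaL_axioms_def\<close>)
  define A0 where "A0 = (\<lambda>q. 3 * q + 0) ` {K..<a}"
  define A1 where "A1 = (\<lambda>q. 3 * q + 1) ` {K..<b}"
  define A2 where "A2 = (\<lambda>q. 3 * q + 2) ` {K..<c}"
  have m0: "\<And>x. x \<in> A0 \<longleftrightarrow> x mod 3 = 0 \<and> K \<le> x div 3 \<and> x div 3 < a"
    unfolding A0_def by (rule img_mod3) auto
  have m1: "\<And>x. x \<in> A1 \<longleftrightarrow> x mod 3 = 1 \<and> K \<le> x div 3 \<and> x div 3 < b"
    unfolding A1_def by (rule img_mod3) auto
  have m2: "\<And>x. x \<in> A2 \<longleftrightarrow> x mod 3 = 2 \<and> K \<le> x div 3 \<and> x div 3 < c"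
    unfolding A2_def by (rule img_mod3) auto
  have le: "\<And>x::int. 3 * K \<le> x \<longleftrightarrow> K \<le> x div 3" by presburger
  have T: "A.T = A0 \<union> A1 \<union> A2"
  proof (rule Set.set_eqI)
    fix x
    show "x \<in> A.T \<longleftrightarrow> x \<in> A0 \<union> A1 \<union> A2"
      unfolding A.T_def Un_iff m0 m1 m2 mem_Collect_eq M3_mem le by auto
  qed
  have d01: "A0 \<inter> A1 = {}" using m0 m1 by auto
  have d2: "(A0 \<union> A1) \<inter> A2 = {}" using m0 m1 m2 by auto
  have c0: "card A0 = nat (a - K)" unfolding A0_def by (subst card_image) (auto simp: inj_on_def)
  have c1: "card A1 = nat (b - K)" unfolding A1_def by (subst card_image) (auto simp: inj_on_def)
  have c2: "card A2 = nat (c - K)" unfolding A2_def by (subst card_image) (auto simp: inj_on_def)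
  have f0: "finite A0" "finite A1" "finite A2" by (auto simp: A0_def A1_def A2_def)
  have "A.r = card (A0 \<union> A1) + card A2"
    unfolding A.r_def T by (rule card_Un_disjoint[OF _ _ d2]) (use f0 in auto)
  also have "card (A0 \<union> A1) = card A0 + card A1" by (rule card_Un_disjoint[OF _ _ d01]) (use f0 in auto)
  finally have "A.r = card A0 + card A1 + card A2" .
  moreover have "K \<le> a" "K \<le> b" "K \<le> c" by (auto simp: K_def)
  ultimately have "int A.r = (a - K) + (b - K) + (c - K)" unfolding c0 c1 c2 by simp
  then show ?thesis using A.charge by simp
qed

lemma Sup_shift:
  fixes X :: "int set"
  assumes "Sup X \<in> X \<and> (\<forall>y\<in>X. y \<le> Sup X)"
  shows "Sup ((\<lambda>k. k + d) ` X) = Sup X + d"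
  by (rule cSup_eq_maximum) (use assms in auto)

lemma shift_part:
  assumes Md: "mayad M lo hi"
  shows "maya_part ((\<lambda>k. k + d) ` M) = maya_part M"
proof -
  interpret A: mayad M lo hi by (rule Md)
  define S where "S = (\<lambda>k. k + d) ` M"
  have Sd: "mayad S (lo + d) (hi + d)"
  proof
    fix k assume "k < lo + d"
    then have "k - d \<in> M" using A.lo by simp
    then show "k \<in> S" unfolding S_def by (intro image_eqI[of _ _ "k - d"]) auto
  next
    fix k assume "k \<in> S" then show "k < hi + d" using A.hi by (auto simp: S_def)
  qed
  have seq: "\<And>i. maya_seq S i = maya_seq M i + d"
  proof -
    fix i show "maya_seq S i = maya_seq M i + d"
    proof (induction i)
      case 0
      have "Sup M \<in> M \<and> (\<forall>y\<in>M. y \<le> Sup M)" using A.ms0 by simp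
      then show ?case unfolding S_def by (simp add: Sup_shift)
    next
      case (Suc i)
      have e: "{k \<in> S. k < maya_seq S i} = (\<lambda>k. k + d) ` {k\<in>M. k < maya_seq M i}"
        unfolding Suc.IH unfolding S_def by auto
      have "Sup {k\<in>M. k < maya_seq M i} \<in> {k\<in>M. k < maya_seq M i} \<and>
          (\<forall>y\<in>{k\<in>M. k < maya_seq M i}. y \<le> Sup {k\<in>M. k < maya_seq M i})"
        using A.Sup_below A.ms_props by blast
      note X = this
      have "maya_seq S (Suc i) = Sup {k\<in>S. k < maya_seq S i}" by simp
      also have "\<dots> = Sup ((\<lambda>k. k + d) ` {k\<in>M. k < maya_seq M i})" by (simp only: e)
      also have "\<dots> = Sup {k\<in>M. k < maya_seq M i} + d" by (rule Sup_shift[OF X])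
      also have "\<dots> = maya_seq M (Suc i) + d" by simp
      finally show ?case .
    qed
  qed
  interpret AL: mayaL M lo hi lo by (rule mayaL.intro[OF Md]) (unfold_locales, simp)
  interpret SL: mayaL S "lo + d" "hi + d" "lo + d" by (rule mayaL.intro[OF Sd]) (unfold_locales, simp)
  have TS: "SL.T = (\<lambda>k. k + d) ` AL.T" unfolding SL.T_def AL.T_def unfolding S_def by force
  have "SL.r = AL.r" unfolding SL.r_def AL.r_def TS by (rule card_image) (simp add: inj_on_def)
  then have ch: "maya_charge S = maya_charge M + d" using SL.charge AL.charge by simp
  show ?thesis unfolding S_def[symmetric]
    by (rule ext) (simp add: maya_part_def seq ch)
qed

lemma img_shift: "x \<in> (\<lambda>k. k + d) ` A \<longleftrightarrow> x - (d::int) \<in> A"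
proof
  assume "x - d \<in> A" then show "x \<in> (\<lambda>k. k + d) ` A" by (intro image_eqI[of _ _ "x - d"]) auto
qed auto

lemma s_eq: "s_mn m n = (\<lambda>x. schur (maya_part (M3 m n 0)) (tx x))"
  by (rule ext) (simp add: s_mn_def lambda_mn_def M_mn_M3 tx_def)

lemma eqA: "hirota (of_int (2 * m - n)) (s_mn m n) (s_mn (m + 1) n) x = 0"
proof -
  have nin: "3 * m \<notin> M3 m n 0" unfolding M3_mem by presburger
  have ins: "insert (3 * m) (M3 m n 0) = M3 (m + 1) n 0"
  proof (rule Set.set_eqI)
    fix k show "k \<in> insert (3 * m) (M3 m n 0) \<longleftrightarrow> k \<in> M3 (m + 1) n 0"
      unfolding insert_iff M3_mem by presburger
  qed
  have "hirota (of_int (3 * m - maya_charge (M3 m n 0))) (\<lambda>x. schur (maya_part (M3 m n 0)) (tx x))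
      (\<lambda>x. schur (maya_part (insert (3 * m) (M3 m n 0))) (tx x)) x = 0"
    by (rule GEN[OF M3_mayad nin])
  moreover have "3 * m - (m + n + 0) = 2 * m - n" by simp
  ultimately show ?thesis unfolding ins M3_charge s_eq by simp
qed

lemma eqB: "hirota (of_int (2 * n - m + 1)) (s_mn m n) (s_mn m (n + 1)) x = 0"
proof -
  have nin: "3 * n + 1 \<notin> M3 m n 0" unfolding M3_mem by presburger
  have ins: "insert (3 * n + 1) (M3 m n 0) = M3 m (n + 1) 0"
  proof (rule Set.set_eqI)
    fix k show "k \<in> insert (3 * n + 1) (M3 m n 0) \<longleftrightarrow> k \<in> M3 m (n + 1) 0"
      unfolding insert_iff M3_mem by presburger
  qed
  have "hirota (of_int (3 * n + 1 - maya_charge (M3 m n 0))) (\<lambda>x. schur (maya_part (M3 m n 0)) (tx x))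
      (\<lambda>x. schur (maya_part (insert (3 * n + 1) (M3 m n 0))) (tx x)) x = 0"
    by (rule GEN[OF M3_mayad nin])
  moreover have "3 * n + 1 - (m + n + 0) = 2 * n - m + 1" by simp
  ultimately show ?thesis unfolding ins M3_charge s_eq by (metis (no_types))
qed

lemma eqC: "hirota (of_int (- (m + n))) (s_mn (m + 1) (n + 1)) (s_mn m n) x = 0"
proof -
  have nin: "0 \<notin> M3 0 m n" unfolding M3_mem by presburger
  have sh1: "(\<lambda>k. k + (-2)) ` M3 (m + 1) (n + 1) 0 = M3 0 m n"
  proof (rule Set.set_eqI)
    fix k :: int
    have c: "(k mod 3 = 0 \<and> (k + 2) mod 3 = 2 \<and> (k + 2) div 3 = k div 3) \<or>
        (k mod 3 = 1 \<and> (k + 2) mod 3 = 0 \<and> (k + 2) div 3 = k div 3 + 1) \<or>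
        (k mod 3 = 2 \<and> (k + 2) mod 3 = 1 \<and> (k + 2) div 3 = k div 3 + 1)" by presburger
    show "k \<in> (\<lambda>k. k + (-2)) ` M3 (m + 1) (n + 1) 0 \<longleftrightarrow> k \<in> M3 0 m n"
      unfolding img_shift M3_mem using c by (elim disjE) auto
  qed
  have sh2: "(\<lambda>k. k + 1) ` M3 m n 0 = insert 0 (M3 0 m n)"
  proof (rule Set.set_eqI)
    fix k :: int
    have c: "(k mod 3 = 0 \<and> (k - 1) mod 3 = 2 \<and> (k - 1) div 3 = k div 3 - 1) \<or>
        (k mod 3 = 1 \<and> (k - 1) mod 3 = 0 \<and> (k - 1) div 3 = k div 3) \<or>
        (k mod 3 = 2 \<and> (k - 1) mod 3 = 1 \<and> (k - 1) div 3 = k div 3)" by presburger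
    have z: "k div 3 < 1 \<and> k mod 3 = 0 \<and> \<not> k div 3 < 0 \<longleftrightarrow> k = 0" by presburger
    show "k \<in> (\<lambda>k. k + 1) ` M3 m n 0 \<longleftrightarrow> k \<in> insert 0 (M3 0 m n)"
      unfolding img_shift insert_iff M3_mem using c z by (elim disjE) auto
  qed
  have p1: "maya_part (M3 (m + 1) (n + 1) 0) = maya_part (M3 0 m n)"
    using shift_part[OF M3_mayad[of "m + 1" "n + 1" 0], of "-2"] sh1 by simp
  have p2: "maya_part (M3 m n 0) = maya_part (insert 0 (M3 0 m n))"
    using shift_part[OF M3_mayad[of m n 0], of 1] sh2 by simp
  have "hirota (of_int (0 - maya_charge (M3 0 m n))) (\<lambda>x. schur (maya_part (M3 0 m n)) (tx x))
      (\<lambda>x. schur (maya_part (insert 0 (M3 0 m n))) (tx x)) x = 0"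
    by (rule GEN[OF M3_mayad nin])
  then show ?thesis unfolding s_eq p1 p2 M3_charge by simp
qed

lemma c3: "A - B = 3 * z \<Longrightarrow> (of_int A - of_int B) / 3 = (of_int z :: real)"
proof -
  assume "A - B = 3 * z"
  then have "of_int A - of_int B = (of_int (3 * z) :: real)" by (metis of_int_diff)
  then show ?thesis by simp
qed

theorem proposition5p5:
  shows "(\<forall>m n :: int. solves_system (s_mn m n) (s_mn (m + 1) n) (s_mn (m + 1) (n + 1))
            (of_int (3 * m + 1)) (of_int (3 * (n - m) + 1)) (of_int (- 3 * n + 1)))
       \<and> (\<forall>m n :: int. solves_system (s_mn m n) (s_mn m (n + 1)) (s_mn (m + 1) (n + 1))
            (of_int (3 * n + 2)) (of_int (3 * (m - n) - 1)) (of_int (- 3 * m + 2)))"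
proof (intro conjI allI)
  fix m n :: int
  have e1: "(of_int (3 * m + 1) - of_int (3 * (n - m) + 1)) / 3 = (of_int (2 * m - n) :: real)" by (rule c3) simp
  have e2: "(of_int (3 * (n - m) + 1) - of_int (- 3 * n + 1)) / 3 = (of_int (2 * n - (m + 1) + 1) :: real)" by (rule c3) simp
  have e3: "(of_int (- 3 * n + 1) - of_int (3 * m + 1)) / 3 = (of_int (- (m + n)) :: real)" by (rule c3) simp
  show "solves_system (s_mn m n) (s_mn (m + 1) n) (s_mn (m + 1) (n + 1))
            (of_int (3 * m + 1)) (of_int (3 * (n - m) + 1)) (of_int (- 3 * n + 1))"
    unfolding solves_system_def e1 e2 e3 using eqA eqB eqC by blast
next
  fix m n :: int
  have e1: "(of_int (3 * n + 2) - of_int (3 * (m - n) - 1)) / 3 = (of_int (2 * n - m + 1) :: real)" by (rule c3) simp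
  have e2: "(of_int (3 * (m - n) - 1) - of_int (- 3 * m + 2)) / 3 = (of_int (2 * m - (n + 1)) :: real)" by (rule c3) simp
  have e3: "(of_int (- 3 * m + 2) - of_int (3 * n + 2)) / 3 = (of_int (- (m + n)) :: real)" by (rule c3) simp
  show "solves_system (s_mn m n) (s_mn m (n + 1)) (s_mn (m + 1) (n + 1))
            (of_int (3 * n + 2)) (of_int (3 * (m - n) - 1)) (of_int (- 3 * m + 2))"
    unfolding solves_system_def e1 e2 e3 using eqA eqB eqC by blast
qed

end
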